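(* Let $0<\gamma<\alpha<1$, $f\in C^1[0,1]$ with $f(0)=0$, $h=\dot f$, $D\in C^1[0,1]$ with $D>0$ on $(0,\alpha)$ and $D<0$ on $(\alpha,1)$, $g\in C^0[0,1]$ with $g<0$ on $(0,\gamma)$, $g>0$ on $(\gamma,1)$, $g(0)=g(\gamma)=g(1)=0$, $q=Dg$. Then Problem (P) admits a solution for some $c\in\mathbb R$ if and only if $c^*_{1.1}<c^*_{1.2}$ and $c_1^*\ge c^*_{3.2}$. In that case necessarily $c=c_1^*$ and the solution is unique.
   Context: Problem (P) (with parameter $c$): find $z\in C^0[0,1]\cap C^1((0,1)\setminus\{\alpha\})$ with $\dot z=h-c-q/z$ on $(0,\alpha)\cup(\alpha,1)$, $z<0$ on $(0,\alpha)$, $z>0$ on $(\alpha,1)$, $z(0)=z(\alpha)=z(1)=0$. Threshold $c^*$: for $\sigma_1<\sigma_2$ and $H,Q$ continuous on $[\sigma_1,\sigma_2]$ with $Q>0$ on $(\sigma_1,\sigma_2)$, $Q(\sigma_1)=Q(\sigma_2)=0$, and every $c$, let $\zeta_c\in C^0[\sigma_1,\sigma_2]\cap C^1(\sigma_1,\sigma_2)$ be the unique function with $\dot\zeta_c=H-c-Q/\zeta_c$, $\zeta_c<0$ on $(\sigma_1,\sigma_2)$, $\zeta_c(\sigma_2)=0$; $c^*(Q;H;\sigma_1,\sigma_2):=\sup\{c:\zeta_c(\sigma_1)<0\}\in(-\infty,\infty]$. With $\tilde q(\phi)=-q(1-\phi)$, $\tilde h(\phi)=-h(1-\phi)$, $\bar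 h(\phi)=h(1-\phi)$: $c^*_{1.1}:=-c^*(\tilde q;\tilde h;1-\gamma,1)$, $c^*_{1.2}:=c^*(q;h;\gamma,\alpha)$, $c^*_{3.2}:=c^*(\tilde q;\bar h;0,1-\alpha)$. When $c^*_{1.1}<c^*_{1.2}$, $c_1^*$ denotes the unique real $c$ for which the problem "find $z\in C^0[0,\alpha]\cap C^1(0,\alpha)$ with $\dot z=h-c-q/z$ and $z<0$ on $(0,\alpha)$, $z(0)=z(\alpha)=0$" has a solution (it lies in $(c^*_{1.1},c^*_{1.2})$). *)

theory Defs
  imports "HOL-Analysis.Analysis" "HOL-Library.Extended_Real"
begin

definition C1_on :: "real \<Rightarrow> real \<Rightarrow> (real \<Rightarrow> real) \<Rightarrow> (real \<Rightarrow> real) \<Rightarrow> bool" where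
  "C1_on a b u u' \<longleftrightarrow> (\<forall>x\<in>{a..b}. (u has_real_derivative u' x) (at x within {a..b}))
                        \<and> continuous_on {a..b} u'"

definition zeta_sol :: "(real \<Rightarrow> real) \<Rightarrow> (real \<Rightarrow> real) \<Rightarrow> real \<Rightarrow> real \<Rightarrow> real
                        \<Rightarrow> (real \<Rightarrow> real) \<Rightarrow> bool" where
  "zeta_sol Q H s1 s2 c \<zeta> \<longleftrightarrow>
     continuous_on {s1..s2} \<zeta>
     \<and> (\<forall>x\<in>{s1<..<s2}. (\<zeta> has_real_derivative (H x - c - Q x / \<zeta> x)) (at x))
     \<and> (\<forall>x\<in>{s1<..<s2}. \<zeta> x < 0)
     \<and> \<zeta> s2 = 0"

text \<open>Threshold c*(Q;H;s1,s2) = sup{c : zeta_c(s1) < 0}, as an extended real.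
  Since zeta_c is unique on [s1,s2], "zeta_c(s1) < 0" is rendered as existence of a
  solution zeta with zeta(s1) < 0.\<close>
definition cstar :: "(real \<Rightarrow> real) \<Rightarrow> (real \<Rightarrow> real) \<Rightarrow> real \<Rightarrow> real \<Rightarrow> ereal" where
  "cstar Q H s1 s2 = Sup {ereal c | c. \<exists>\<zeta>. zeta_sol Q H s1 s2 c \<zeta> \<and> \<zeta> s1 < 0}"

definition probP :: "real \<Rightarrow> (real \<Rightarrow> real) \<Rightarrow> (real \<Rightarrow> real) \<Rightarrow> real \<Rightarrow> (real \<Rightarrow> real) \<Rightarrow> bool" where
  "probP \<alpha> h q c z \<longleftrightarrow>
     continuous_on {0..1} z
     \<and> (\<forall>x\<in>{0<..<1} - {\<alpha>}. (z has_real_derivative (h x - c - q x / z x)) (at x))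
     \<and> (\<forall>x\<in>{0<..<\<alpha>}. z x < 0)
     \<and> (\<forall>x\<in>{\<alpha><..<1}. z x > 0)
     \<and> z 0 = 0 \<and> z \<alpha> = 0 \<and> z 1 = 0"

definition prob1 :: "real \<Rightarrow> (real \<Rightarrow> real) \<Rightarrow> (real \<Rightarrow> real) \<Rightarrow> real \<Rightarrow> (real \<Rightarrow> real) \<Rightarrow> bool" where
  "prob1 \<alpha> h q c z \<longleftrightarrow>
     continuous_on {0..\<alpha>} z
     \<and> (\<forall>x\<in>{0<..<\<alpha>}. (z has_real_derivative (h x - c - q x / z x)) (at x))
     \<and> (\<forall>x\<in>{0<..<\<alpha>}. z x < 0)
     \<and> z 0 = 0 \<and> z \<alpha> = 0"

definition c11 :: "real \<Rightarrow> (real \<Rightarrow> real) \<Rightarrow> (real \<Rightarrow> real) \<Rightarrow> ereal" where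
  "c11 \<gamma> h q = - cstar (\<lambda>\<phi>. - q (1 - \<phi>)) (\<lambda>\<phi>. - h (1 - \<phi>)) (1 - \<gamma>) 1"

definition c12 :: "real \<Rightarrow> real \<Rightarrow> (real \<Rightarrow> real) \<Rightarrow> (real \<Rightarrow> real) \<Rightarrow> ereal" where
  "c12 \<gamma> \<alpha> h q = cstar q h \<gamma> \<alpha>"

definition c32 :: "real \<Rightarrow> (real \<Rightarrow> real) \<Rightarrow> (real \<Rightarrow> real) \<Rightarrow> ereal" where
  "c32 \<alpha> h q = cstar (\<lambda>\<phi>. - q (1 - \<phi>)) (\<lambda>\<phi>. h (1 - \<phi>)) 0 (1 - \<alpha>)"

text \<open>c_1^*: the unique c for which prob1 has a solution (meaningful when c11 < c12).\<close>
definition c1star :: "real \<Rightarrow> (real \<Rightarrow> real) \<Rightarrow> (real \<Rightarrow> real) \<Rightarrow> real" where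
  "c1star \<alpha> h q = (THE c. \<exists>z. prob1 \<alpha> h q c z)"

end

theory Submission
  imports Defs
begin

lemma key_nonincr:
  fixes u u' :: "real \<Rightarrow> real"
  assumes xy: "x \<le> y" and cont: "continuous_on {x..y} u"
    and der: "\<And>t. x < t \<Longrightarrow> t < y \<Longrightarrow> (u has_real_derivative u' t) (at t)"
    and sg: "\<And>t. x < t \<Longrightarrow> t < y \<Longrightarrow> u t < \<theta> \<Longrightarrow> u' t \<le> 0"
    and ux: "u x < \<theta>"
  shows "u y \<le> u x"
proof (rule ccontr)
  assume "\<not> u y \<le> u x"
  hence uy: "u y > u x" by simp
  define Z where "Z = {x..y} \<inter> u -` {..u x}"
  have clZ: "closed Z" unfolding Z_def
    by (rule continuous_closed_preimage[OF cont]) auto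
  have xZ: "x \<in> Z" using xy by (auto simp: Z_def)
  have bdd: "bdd_above Z" unfolding Z_def by (auto intro: bdd_aboveI[of _ y])
  define t0 where "t0 = Sup Z"
  have t0Z: "t0 \<in> Z" unfolding t0_def using closed_contains_Sup[OF _ bdd] clZ xZ by auto
  have t0le: "t0 \<le> y" "x \<le> t0" using t0Z xZ bdd unfolding Z_def t0_def
    by (auto intro: cSup_upper)
  have ut0: "u t0 \<le> u x" using t0Z by (auto simp: Z_def)
  have t0y: "t0 < y" using t0le ut0 uy by (cases "t0 = y") auto
  have above: "u t > u x" if "t0 < t" "t \<le> y" for t
  proof (rule ccontr)
    assume "\<not> u t > u x"
    hence "t \<in> Z" using that t0le by (auto simp: Z_def)
    hence "t \<le> t0" unfolding t0_def using bdd by (rule cSup_upper)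
    thus False using that by simp
  qed
  have "continuous (at t0 within {x..y}) u"
    using cont t0le by (simp add: continuous_on_eq_continuous_within)
  hence "\<forall>e>0. \<exists>d>0. \<forall>t\<in>{x..y}. dist t t0 < d \<longrightarrow> dist (u t) (u t0) < e"
    by (simp add: continuous_within_eps_delta)
  then obtain d where d: "d > 0" "\<And>t. t \<in> {x..y} \<Longrightarrow> dist t t0 < d \<Longrightarrow> dist (u t) (u t0) < \<theta> - u t0"
    using ux ut0 by (metis diff_gt_0_iff_gt order_le_less_trans)
  define t1 where "t1 = min y (t0 + d/2)"
  have t1: "t0 < t1" "t1 \<le> y" using t0y d by (auto simp: t1_def)
  have small: "u t < \<theta>" if "t0 \<le> t" "t \<le> t1" for t
  proof -
    have "dist (u t) (u t0) < \<theta> - u t0"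
      using d(2)[of t] that t0le t1 d(1) by (auto simp: t1_def dist_real_def)
    thus ?thesis by (auto simp: dist_real_def)
  qed
  have "continuous_on {t0..t1} u" by (rule continuous_on_subset[OF cont]) (use t0le t1 in auto)
  moreover have "\<And>t. t0 < t \<Longrightarrow> t < t1 \<Longrightarrow> u differentiable (at t)"
    using der t0le t1 real_differentiable_def by (meson le_less_trans less_le_trans)
  ultimately obtain l z where z: "t0 < z" "z < t1" "DERIV u z :> l" "u t1 - u t0 = (t1 - t0) * l"
    using MVT[OF t1(1)] by blast
  have "l = u' z" using DERIV_unique[OF z(3) der[of z]] z t0le t1 by auto
  moreover have "u' z \<le> 0" using sg[of z] small[of z] z t0le t1 by auto
  ultimately have "(t1 - t0) * l \<le> 0" using t1 by (simp add: mult_nonneg_nonpos)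
  hence "u t1 \<le> u t0" using z(4) by linarith
  thus False using above[OF t1] ut0 by simp
qed

lemma lip_cont:
  fixes phi :: "real \<Rightarrow> real"
  assumes Lip: "\<And>x y. \<bar>phi x - phi y\<bar> \<le> L * \<bar>x - y\<bar>" and L: "0 \<le> L"
  shows "continuous_on S phi"
  unfolding continuous_on_iff
proof (intro ballI allI impI)
  fix x e :: real assume "e > 0"
  show "\<exists>d>0. \<forall>x'\<in>S. dist x' x < d \<longrightarrow> dist (phi x') (phi x) < e"
  proof (intro exI[of _ "e/(L+1)"] conjI ballI impI)
    show "e/(L+1) > 0" using \<open>e>0\<close> L by simp
    fix x' assume "dist x' x < e/(L+1)"
    hence "(L+1) * \<bar>x' - x\<bar> < e" using L by (simp add: dist_real_def field_simps)
    moreover have "\<bar>phi x' - phi x\<bar> \<le> (L+1) * \<bar>x' - x\<bar>"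
      using Lip[of x' x] by (smt (verit) abs_ge_zero mult_right_mono)
    ultimately show "dist (phi x') (phi x) < e" by (simp add: dist_real_def)
  qed
qed

lemma integral_pow_down:
  fixes x b :: real assumes "x \<le> b"
  shows "integral {x..b} (\<lambda>t. (b - t)^n) = (b - x)^(Suc n) / real (Suc n)"
proof -
  define F where "F t = - ((b - t)^(Suc n)) / real (Suc n)" for t
  have "((\<lambda>t. (b - t)^n) has_integral (F b - F x)) {x..b}"
    unfolding F_def
    apply (rule fundamental_theorem_of_calculus[OF assms])
    apply (auto intro!: derivative_eq_intros simp: has_real_derivative_iff_has_vector_derivative[symmetric])
    apply (cases n)
     apply (auto simp: field_simps)
    done
  thus ?thesis by (simp add: integral_unique F_def)
qed

lemma picard:
  fixes A B phi :: "real \<Rightarrow> real"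
  assumes ab: "a < b" and cA: "continuous_on {a..b} A" and cB: "continuous_on {a..b} B"
    and Lip: "\<And>x y. \<bar>phi x - phi y\<bar> \<le> L * \<bar>x - y\<bar>" and L: "0 \<le> L"
  shows "\<exists>u. continuous_on {a..b} u \<and> u b = u0 \<and>
           (\<forall>x\<in>{a..b}. (u has_real_derivative (A x + B x * phi (u x))) (at x within {a..b}))"
proof -
  have cphi: "continuous_on S phi" for S using lip_cont[OF Lip L] .
  define cl where "cl x = max a (min x b)" for x
  have clin: "cl x \<in> {a..b}" for x using ab by (auto simp: cl_def)
  have clid: "x \<in> {a..b} \<Longrightarrow> cl x = x" for x by (auto simp: cl_def)
  have ccl: "continuous_on UNIV cl" unfolding cl_def by (intro continuous_intros)
  define G where "G f t = A t + B t * phi (f t)" for f :: "real \<Rightarrow> real" and t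
  have cG: "continuous_on {a..b} (G f)" if "continuous_on {a..b} f" for f
    unfolding G_def
    by (intro continuous_intros cA cB continuous_on_compose2[OF cphi that]) auto
  define I where "I f s = u0 - integral {s..b} (G f)" for f s
  have cI: "continuous_on {a..b} (I f)" if "continuous_on {a..b} f" for f
    unfolding I_def
    by (intro continuous_intros indefinite_integral_continuous_1' integrable_continuous_real cG that)
  have mem: "(\<lambda>x. I f (cl x)) \<in> bcontfun" if "continuous_on {a..b} f" for f
  proof -
    have c: "continuous_on UNIV (\<lambda>x. I f (cl x))"
      by (rule continuous_on_compose2[OF cI[OF that] ccl]) (use clin in auto)
    have "range (\<lambda>x. I f (cl x)) \<subseteq> I f ` {a..b}" using clin by auto
    moreover have "bounded (I f ` {a..b})"
      by (rule compact_imp_bounded, rule compact_continuous_image[OF cI[OF that]]) auto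
    ultimately have "bounded (range (\<lambda>x. I f (cl x)))" by (rule bounded_subset[rotated])
    thus ?thesis using c by (simp add: bcontfun_def)
  qed
  define T where "T f = Bcontfun (\<lambda>x. I (apply_bcontfun f) (cl x))" for f :: "real \<Rightarrow>\<^sub>C real"
  have Tapp: "apply_bcontfun (T f) x = I (apply_bcontfun f) (cl x)" for f x
    unfolding T_def using mem[of "apply_bcontfun f"] continuous_on_apply_bcontfun
    by (simp add: Bcontfun_inverse)
  obtain Bm where Bm: "\<And>t. t \<in> {a..b} \<Longrightarrow> \<bar>B t\<bar> \<le> Bm" "0 \<le> Bm"
  proof -
    have "bounded (B ` {a..b})" by (rule compact_imp_bounded, rule compact_continuous_image[OF cB]) auto
    then obtain M where M: "\<forall>t\<in>{a..b}. \<bar>B t\<bar> \<le> M" by (auto simp: bounded_iff)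
    show ?thesis by (rule that[of "max M 0"]) (use M in force)+
  qed
  define K where "K = Bm * L"
  have K0: "0 \<le> K" using Bm L by (simp add: K_def)
  have est: "\<forall>x\<in>{a..b}. \<bar>(T^^n) f x - (T^^n) g x\<bar> \<le> K^n * (b - x)^n / fact n * dist f g" for n f g
  proof (induction n)
    case 0
    then show ?case using dist_bounded[of f _ g] by (simp add: dist_real_def)
  next
    case (Suc n)
    show ?case
    proof
      fix x assume x: "x \<in> {a..b}"
      let ?F = "apply_bcontfun ((T^^n) f)" and ?G = "apply_bcontfun ((T^^n) g)"
      have cF: "continuous_on {a..b} ?F" "continuous_on {a..b} ?G" by auto
      have i1: "G ?F integrable_on {x..b}" "G ?G integrable_on {x..b}"
        using x by (auto intro!: integrable_continuous_real continuous_on_subset[OF cG] cF)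
      have "(T^^Suc n) f x - (T^^Suc n) g x = integral {x..b} (G ?G) - integral {x..b} (G ?F)"
        using x by (simp add: Tapp I_def clid)
      also have "\<dots> = integral {x..b} (\<lambda>t. G ?G t - G ?F t)"
        using i1 by (simp add: integral_diff)
      finally have eq: "(T^^Suc n) f x - (T^^Suc n) g x = integral {x..b} (\<lambda>t. G ?G t - G ?F t)" .
      have bnd: "norm (G ?G t - G ?F t) \<le> K * (K^n * (b - t)^n / fact n * dist f g)" if t: "t \<in> {x..b}" for t
      proof -
        have ta: "t \<in> {a..b}" using t x by auto
        have "\<bar>G ?G t - G ?F t\<bar> = \<bar>B t\<bar> * \<bar>phi (?G t) - phi (?F t)\<bar>"
          by (simp add: G_def abs_mult[symmetric] right_diff_distrib)
        also have "\<dots> \<le> Bm * (L * \<bar>?G t - ?F t\<bar>)"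
          by (intro mult_mono Bm ta Lip) auto
        also have "\<dots> \<le> Bm * (L * (K^n * (b - t)^n / fact n * dist f g))"
          using Suc.IH ta Bm L by (intro mult_left_mono) (auto simp: abs_minus_commute)
        finally show ?thesis by (simp add: K_def mult.assoc)
      qed
      have i2: "(\<lambda>t. K * (K^n * (b - t)^n / fact n * dist f g)) integrable_on {x..b}"
        by (intro integrable_continuous_real continuous_intros) auto
      have "\<bar>(T^^Suc n) f x - (T^^Suc n) g x\<bar> \<le> integral {x..b} (\<lambda>t. K * (K^n * (b - t)^n / fact n * dist f g))"
        unfolding eq using integral_norm_bound_integral[OF _ i2 bnd] i1
        by (simp add: integrable_diff)
      also have "\<dots> = K^(Suc n) / fact n * dist f g * integral {x..b} (\<lambda>t. (b - t)^n)"
        by (simp add: algebra_simps)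
      also have "\<dots> = K^(Suc n) * (b - x)^(Suc n) / fact (Suc n) * dist f g"
        using x by (simp add: integral_pow_down field_simps)
      finally show "\<bar>(T^^Suc n) f x - (T^^Suc n) g x\<bar> \<le> K^(Suc n) * (b - x)^(Suc n) / fact (Suc n) * dist f g" .
    qed
  qed
  have Tcl: "(T^^Suc n) f x = (T^^Suc n) f (cl x)" for n f x
    by (simp add: Tapp clid[OF clin])
  have distT: "dist ((T^^Suc n) f) ((T^^Suc n) g) \<le> (K * (b - a))^(Suc n) / fact (Suc n) * dist f g" for n f g
  proof (rule dist_bound)
    fix x
    have "dist ((T^^Suc n) f x) ((T^^Suc n) g x) = \<bar>(T^^Suc n) f (cl x) - (T^^Suc n) g (cl x)\<bar>"
      by (metis Tcl dist_real_def)
    also have "\<dots> \<le> K^(Suc n) * (b - cl x)^(Suc n) / fact (Suc n) * dist f g"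
      using est clin by blast
    also have "\<dots> \<le> K^(Suc n) * (b - a)^(Suc n) / fact (Suc n) * dist f g"
      using clin[of x] K0 
      by (intro mult_right_mono divide_right_mono mult_left_mono power_mono) auto
    finally show "dist ((T^^Suc n) f x) ((T^^Suc n) g x) \<le> (K * (b - a))^(Suc n) / fact (Suc n) * dist f g"
      by (simp only: power_mult_distrib)
  qed
  have "(\<lambda>n. inverse (fact n) * (K * (b - a))^n) \<longlonglongrightarrow> 0"
    by (rule summable_LIMSEQ_zero[OF summable_exp])
  hence "eventually (\<lambda>n. inverse (fact n) * (K * (b - a))^n < 1/2) sequentially"
    by (rule order_tendstoD) simp
  then obtain N where N: "\<And>n. n \<ge> N \<Longrightarrow> inverse (fact n) * (K * (b - a))^n < 1/2"
    by (auto simp: eventually_sequentially)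
  define m where "m = Suc N"
  have cm: "(K * (b - a))^m / fact m < 1/2" using N[of m] by (simp add: m_def field_simps)
  have cm0: "0 \<le> (K * (b - a))^m / fact m" using K0 ab by simp
  have cm1: "(K * (b - a))^m / fact m < 1" using cm by linarith
  have "\<exists>!x. (T^^m) x = x"
    by (rule banach_fix_type[of "(K * (b - a))^m / fact m"]) (use cm1 cm0 distT in \<open>simp_all add: m_def\<close>)
  then obtain fx where fx: "(T^^m) fx = fx" "\<And>y. (T^^m) y = y \<Longrightarrow> y = fx"
    by metis
  have "(T^^m) (T fx) = T fx"
    by (metis fx(1) funpow_swap1)
  hence Tfx: "T fx = fx" using fx(2) by blast
  define u where "u = apply_bcontfun fx"
  have ueq: "u x = I u x" if "x \<in> {a..b}" for x
    using Tapp[of fx x] Tfx that by (simp add: u_def clid)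
  have cu: "continuous_on {a..b} u" by (simp add: u_def)
  show ?thesis
  proof (intro exI[of _ u] conjI ballI)
    show "continuous_on {a..b} u" by (rule cu)
    show "u b = u0" using ueq[of b] ab by (simp add: I_def)
    fix x assume x: "x \<in> {a..b}"
    have d: "((\<lambda>s. u0 - integral {s..b} (G u)) has_real_derivative (0 - - G u x)) (at x within {a..b})"
      by (intro derivative_intros integral_has_real_derivative' cG cu x)
    have "((\<lambda>s. u s) has_real_derivative G u x) (at x within {a..b})"
      by (rule has_field_derivative_transform_within[OF d[simplified], of 1]) (use x in \<open>auto simp: ueq[unfolded I_def] dist_real_def\<close>)
    thus "(u has_real_derivative (A x + B x * phi (u x))) (at x within {a..b})" by (simp add: G_def)
  qed
qed

lemma near_point:
  fixes s b x d :: real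
  assumes "s < b" "x \<in> {s..b}" "d > 0"
  obtains t where "s < t" "t < b" "dist t x < d"
proof (cases "x < b")
  case True
  show ?thesis by (rule that[of "min (x + d/2) ((x+b)/2)"]) (use True assms in \<open>auto simp: dist_real_def min_def\<close>)
next
  case False
  hence xb: "x = b" using assms by auto
  have "s < max (b - d/2) ((s+b)/2)" "max (b - d/2) ((s+b)/2) < b" "dist (max (b - d/2) ((s+b)/2)) x < d"
    using xb assms by (auto simp: dist_real_def max_def field_simps)
  thus ?thesis by (rule that)
qed

locale sing =
  fixes a b :: real and H Q :: "real \<Rightarrow> real"
  assumes ab: "a < b" and cH: "continuous_on {a..b} H" and cQ: "continuous_on {a..b} Q"
    and Qpos: "\<And>x. a < x \<Longrightarrow> x < b \<Longrightarrow> Q x > 0"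
begin

definition rsol where
  "rsol c s u \<longleftrightarrow> continuous_on {s..b} u \<and> u b = 0 \<and> (\<forall>t\<in>{s<..<b}. u t < 0)
      \<and> (\<forall>t\<in>{s<..<b}. (u has_real_derivative (H t - c - Q t / u t)) (at t))"

lemma zeta_rsol: "zeta_sol Q H a b c z \<longleftrightarrow> rsol c a z"
  by (auto simp: zeta_sol_def rsol_def)

lemma Qnn: assumes "x \<in> {a..b}" shows "Q x \<ge> 0"
proof (rule ccontr)
  assume neg: "\<not> Q x \<ge> 0"
  have "continuous (at x within {a..b}) Q" using cQ assms by (simp add: continuous_on_eq_continuous_within)
  then obtain d where d: "d > 0" "\<And>t. t \<in> {a..b} \<Longrightarrow> dist t x < d \<Longrightarrow> dist (Q t) (Q x) < - Q x"
    using neg unfolding continuous_within_eps_delta by (metis neg_0_less_iff_less not_le)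
  obtain t where t: "a < t" "t < b" "dist t x < d" using near_point[OF ab assms d(1)] .
  have "Q t < 0" using d(2)[of t] t by (auto simp: dist_real_def)
  thus False using Qpos[OF t(1,2)] by simp
qed

lemma rsol_nonpos:
  assumes "rsol c s u" "s < b" "x \<in> {s..b}" shows "u x \<le> 0"
proof (rule ccontr)
  assume pos: "\<not> u x \<le> 0"
  have cu: "continuous_on {s..b} u" using assms(1) by (simp add: rsol_def)
  have "continuous (at x within {s..b}) u" using cu assms by (simp add: continuous_on_eq_continuous_within)
  then obtain d where d: "d > 0" "\<And>t. t \<in> {s..b} \<Longrightarrow> dist t x < d \<Longrightarrow> dist (u t) (u x) < u x"
    using pos unfolding continuous_within_eps_delta by (metis not_le)
  obtain t where t: "s < t" "t < b" "dist t x < d" using near_point[OF assms(2,3) d(1)] .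
  have "u t > 0" using d(2)[of t] t by (auto simp: dist_real_def)
  moreover have "u t < 0" using assms(1) t by (simp add: rsol_def)
  ultimately show False by simp
qed

lemma rsol_cmp:
  assumes s: "a \<le> s" "s < b" and r1: "rsol c1 s u1" and r2: "rsol c2 s u2" and c: "c1 \<le> c2"
    and x0: "x0 \<in> {s..b}"
  shows "u1 x0 \<le> u2 x0"
proof (rule ccontr)
  assume "\<not> u1 x0 \<le> u2 x0"
  hence lt: "u2 x0 - u1 x0 < 0" by simp
  have x0b: "x0 < b" using lt x0 r1 r2 by (cases "x0 = b") (auto simp: rsol_def)
  define w where "w t = u2 t - u1 t" for t
  define w' where "w' t = (H t - c2 - Q t / u2 t) - (H t - c1 - Q t / u1 t)" for t
  have "w b \<le> w x0"
  proof (rule key_nonincr[of x0 b w w' 0])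
    show "x0 \<le> b" using x0b by simp
    have sub: "{x0..b} \<subseteq> {s..b}" using x0 by auto
    have "continuous_on {x0..b} u1" "continuous_on {x0..b} u2"
      using r1 r2 continuous_on_subset[OF _ sub] by (auto simp: rsol_def)
    thus "continuous_on {x0..b} w" unfolding w_def by (intro continuous_intros)
    fix t assume t: "x0 < t" "t < b"
    hence ts: "t \<in> {s<..<b}" using x0 by auto
    have d1: "(u1 has_real_derivative (H t - c1 - Q t / u1 t)) (at t)"
      and d2: "(u2 has_real_derivative (H t - c2 - Q t / u2 t)) (at t)"
      using r1 r2 ts by (auto simp: rsol_def)
    show "(w has_real_derivative w' t) (at t)" unfolding w_def w'_def
      by (rule DERIV_diff[OF d2 d1])
    assume wt: "w t < 0"
    have neg: "u1 t < 0" "u2 t < 0" using r1 r2 ts by (auto simp: rsol_def)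
    have "u2 t < u1 t" using wt by (simp add: w_def)
    hence "1 / u1 t \<le> 1 / u2 t" using neg by (simp add: divide_simps)
    moreover have "Q t \<ge> 0" using Qnn ts s by auto
    ultimately have "Q t * (1 / u1 t) \<le> Q t * (1 / u2 t)" by (rule mult_left_mono)
    thus "w' t \<le> 0" using c by (simp add: w'_def)
  qed (use lt w_def in auto)
  moreover have "w b = 0" using r1 r2 by (simp add: w_def rsol_def)
  ultimately show False using lt by (simp add: w_def)
qed

lemma rsol_unique:
  assumes "a \<le> s" "s < b" "rsol c s u1" "rsol c s u2" "x \<in> {s..b}"
  shows "u1 x = u2 x"
  using rsol_cmp[OF assms(1,2,3,4) order_refl assms(5)] rsol_cmp[OF assms(1,2,4,3) order_refl assms(5)]
  by simp

lemma rsol_lip: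
  assumes r1: "rsol c1 a u1" and r2: "rsol c2 a u2" and c: "c1 \<le> c2"
  shows "u2 a - u1 a \<le> (c2 - c1) * (b - a)"
proof -
  define w where "w t = u2 t - u1 t" for t
  define w' where "w' t = (H t - c2 - Q t / u2 t) - (H t - c1 - Q t / u1 t)" for t
  have cw: "continuous_on {a..b} w" unfolding w_def using r1 r2 by (intro continuous_intros) (auto simp: rsol_def)
  have dw: "(w has_real_derivative w' t) (at t)" if "a < t" "t < b" for t
  proof -
    have d1: "(u1 has_real_derivative (H t - c1 - Q t / u1 t)) (at t)"
      and d2: "(u2 has_real_derivative (H t - c2 - Q t / u2 t)) (at t)"
      using r1 r2 that by (auto simp: rsol_def)
    show ?thesis unfolding w_def w'_def by (rule DERIV_diff[OF d2 d1])
  qed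
  obtain l z where z: "a < z" "z < b" "DERIV w z :> l" "w b - w a = (b - a) * l"
    using MVT[OF ab cw] dw real_differentiable_def by meson
  have l: "l = w' z" using DERIV_unique[OF z(3) dw[OF z(1,2)]] .
  have neg: "u1 z < 0" "u2 z < 0" using r1 r2 z by (auto simp: rsol_def)
  have "u1 z \<le> u2 z" using rsol_cmp[OF order_refl ab r1 r2 c] z by auto
  hence "1 / u2 z \<le> 1 / u1 z" using neg by (simp add: divide_simps)
  moreover have "Q z \<ge> 0" using Qnn z by auto
  ultimately have "Q z * (1 / u2 z) \<le> Q z * (1 / u1 z)" by (rule mult_left_mono)
  hence "l \<ge> c1 - c2" using l by (simp add: w'_def)
  hence "(b - a) * l \<ge> (b - a) * (c1 - c2)" using ab by (simp add: mult_left_mono)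
  moreover have "w b = 0" using r1 r2 by (simp add: w_def rsol_def)
  ultimately show ?thesis using z(4) by (simp add: w_def algebra_simps)
qed

lemma rsol_bnd:
  assumes r: "rsol c a u" and m: "\<And>x. x \<in> {a..b} \<Longrightarrow> m \<le> H x"
  shows "u a \<le> - (m - c) * (b - a)"
proof -
  have cu: "continuous_on {a..b} u" using r by (simp add: rsol_def)
  have du: "(u has_real_derivative (H t - c - Q t / u t)) (at t)" if "a < t" "t < b" for t
    using r that by (simp add: rsol_def)
  obtain l z where z: "a < z" "z < b" "DERIV u z :> l" "u b - u a = (b - a) * l"
    using MVT[OF ab cu] du real_differentiable_def by meson
  have l: "l = H z - c - Q z / u z" using DERIV_unique[OF z(3) du[OF z(1,2)]] .
  have "u z < 0" using r z by (simp add: rsol_def)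
  moreover have "Q z \<ge> 0" using Qnn z by auto
  ultimately have "Q z / u z \<le> 0" by (simp add: divide_nonneg_neg)
  hence "l \<ge> m - c" using l m[of z] z by auto
  hence "(b - a) * l \<ge> (b - a) * (m - c)" using ab by (simp add: mult_left_mono)
  moreover have "u b = 0" using r by (simp add: rsol_def)
  ultimately show ?thesis using z(4) by (simp add: algebra_simps)
qed

end

lemma bound_on:
  fixes f :: "real \<Rightarrow> real"
  assumes "continuous_on {x..y} f"
  obtains M where "M \<ge> 1" "\<And>t. t \<in> {x..y} \<Longrightarrow> \<bar>f t\<bar> \<le> M"
proof -
  have "bounded (f ` {x..y})" by (rule compact_imp_bounded, rule compact_continuous_image[OF assms]) auto
  then obtain M where M: "\<forall>t\<in>{x..y}. \<bar>f t\<bar> \<le> M" by (auto simp: bounded_iff)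
  show ?thesis by (rule that[of "max M 1"]) (use M in force)+
qed

lemma sq_bound:
  fixes u r :: real
  assumes "u\<^sup>2 < r\<^sup>2" "r \<ge> 0" shows "\<bar>u\<bar> < r"
  using assms by (metis abs_ge_zero power2_abs power2_less_imp_less)

context sing
begin

lemma posmin:
  assumes "a < x" "x \<le> y" "y < b"
  obtains q0 where "q0 > 0" "\<And>t. t \<in> {x..y} \<Longrightarrow> q0 \<le> Q t"
proof -
  have "continuous_on {x..y} Q" by (rule continuous_on_subset[OF cQ]) (use assms in auto)
  then obtain t0 where t0: "t0 \<in> {x..y}" "\<And>t. t \<in> {x..y} \<Longrightarrow> Q t0 \<le> Q t"
    using continuous_attains_inf[of "{x..y}" Q] assms by auto
  have "Q t0 > 0" using Qpos t0(1) assms by auto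
  thus ?thesis using that t0 by blast
qed

definition esol where
  "esol c s e u \<longleftrightarrow> continuous_on {s..e} u \<and> (\<forall>t\<in>{s<..<e}. u t < 0 \<and>
      (u has_real_derivative (H t - c - Q t / u t)) (at t))"

lemma esol_sub:
  assumes "esol c s e u" "s \<le> s'" "s' < e'" "e' \<le> e"
  shows "esol c s' e' u"
  using assms unfolding esol_def
  by (auto intro: continuous_on_subset)

lemma gen_cmp:
  assumes se: "s < e" and e1: "esol c1 s e u1" and e2: "esol c2 s e u2" and c: "c1 \<le> c2"
    and sab: "a \<le> s" "e \<le> b"
    and ue: "u1 e \<le> u2 e" and x0: "x0 \<in> {s..e}"
  shows "u1 x0 \<le> u2 x0"
proof (rule ccontr)
  assume "\<not> u1 x0 \<le> u2 x0"
  hence lt: "u2 x0 - u1 x0 < 0" by simp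
  have x0b: "x0 < e" using lt x0 ue by (cases "x0 = e") auto
  define w where "w t = u2 t - u1 t" for t
  define w' where "w' t = (H t - c2 - Q t / u2 t) - (H t - c1 - Q t / u1 t)" for t
  have "w e \<le> w x0"
  proof (rule key_nonincr[of x0 e w w' 0])
    show "x0 \<le> e" using x0b by simp
    have sub: "{x0..e} \<subseteq> {s..e}" using x0 by auto
    have "continuous_on {x0..e} u1" "continuous_on {x0..e} u2"
      using e1 e2 continuous_on_subset[OF _ sub] by (auto simp: esol_def)
    thus "continuous_on {x0..e} w" unfolding w_def by (intro continuous_intros)
    fix t assume t: "x0 < t" "t < e"
    hence ts: "t \<in> {s<..<e}" using x0 by auto
    have d1: "(u1 has_real_derivative (H t - c1 - Q t / u1 t)) (at t)"
      and d2: "(u2 has_real_derivative (H t - c2 - Q t / u2 t)) (at t)"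
      using e1 e2 ts by (auto simp: esol_def)
    show "(w has_real_derivative w' t) (at t)" unfolding w_def w'_def
      by (rule DERIV_diff[OF d2 d1])
    assume wt: "w t < 0"
    have neg: "u1 t < 0" "u2 t < 0" using e1 e2 ts by (auto simp: esol_def)
    have "u2 t < u1 t" using wt by (simp add: w_def)
    hence "1 / u1 t \<le> 1 / u2 t" using neg by (simp add: divide_simps)
    moreover have "Q t \<ge> 0" using Qnn ts sab by auto
    ultimately have "Q t * (1 / u1 t) \<le> Q t * (1 / u2 t)" by (rule mult_left_mono)
    thus "w' t \<le> 0" using c by (simp add: w'_def)
  qed (use lt w_def in auto)
  thus False using lt ue by (simp add: w_def)
qed

lemma gen_sq:
  assumes se: "s < e" and es: "esol c s e u" and sab: "a \<le> s" "e \<le> b"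
    and M: "\<And>t. t \<in> {s..e} \<Longrightarrow> \<bar>H t - c\<bar> \<le> M"
    and qq: "\<And>t. t \<in> {s<..<e} \<Longrightarrow> qq \<le> Q t"
    and r: "r \<ge> 0" "\<kappa> \<ge> 0" "2 * M * r + \<kappa> \<le> 2 * qq"
    and us: "(u s)\<^sup>2 < r\<^sup>2"
  shows "(u e)\<^sup>2 + \<kappa> * e \<le> (u s)\<^sup>2 + \<kappa> * s"
proof -
  define V where "V t = (u t)\<^sup>2 + \<kappa> * t" for t
  define V' where "V' t = 2 * u t * (H t - c - Q t / u t) + \<kappa>" for t
  have "V e \<le> V s"
  proof (rule key_nonincr[of s e V V' "r\<^sup>2 + \<kappa> * s"])
    show "s \<le> e" using se by simp
    show "continuous_on {s..e} V" unfolding V_def using es by (intro continuous_intros) (auto simp: esol_def)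
    fix t assume t: "s < t" "t < e"
    have d: "(u has_real_derivative (H t - c - Q t / u t)) (at t)" and neg: "u t < 0"
      using es t by (auto simp: esol_def)
    show "(V has_real_derivative V' t) (at t)" unfolding V_def V'_def
      by (auto intro!: derivative_eq_intros d)
    assume Vt: "V t < r\<^sup>2 + \<kappa> * s"
    have "(u t)\<^sup>2 < r\<^sup>2" using Vt t r(2) unfolding V_def
      by (smt (verit) mult_left_mono)
    hence ut: "\<bar>u t\<bar> < r" using r(1) by (rule sq_bound)
    have Mt: "\<bar>H t - c\<bar> \<le> M" using M t by auto
    have "2 * u t * (H t - c) \<le> 2 * \<bar>u t\<bar> * \<bar>H t - c\<bar>"
      by (metis abs_ge_self abs_mult mult.assoc mult_le_cancel_left_pos zero_less_numeral)
    also have "\<dots> \<le> 2 * r * M" using ut Mt by (intro mult_mono) auto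
    also have "\<dots> = 2 * M * r" by simp
    finally have A: "2 * u t * (H t - c) \<le> 2 * M * r" .
    have B: "2 * u t * (Q t / u t) = 2 * Q t" using neg by simp
    have "V' t = 2 * u t * (H t - c) - 2 * Q t + \<kappa>" unfolding V'_def using B
      by (simp add: algebra_simps)
    moreover have "qq \<le> Q t" using qq[of t] t by auto
    ultimately show "V' t \<le> 0" using A r(3) by linarith
  qed (use us V_def in auto)
  thus ?thesis by (simp add: V_def)
qed

lemma gen_lin:
  assumes se: "s < e" and es: "esol c s e u" and sab: "a \<le> s" "e \<le> b"
    and M: "\<And>t. t \<in> {s..e} \<Longrightarrow> \<bar>H t - c\<bar> \<le> M" and x: "x \<in> {s..e}"
  shows "- u x \<ge> - u e - M * (e - x)"
proof (cases "x = e")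
  case True thus ?thesis by simp
next
  case False
  hence xe: "x < e" using x by auto
  have cu: "continuous_on {x..e} u" using es x by (auto simp: esol_def intro: continuous_on_subset)
  have du: "(u has_real_derivative (H t - c - Q t / u t)) (at t)" if "x < t" "t < e" for t
    using es that x by (auto simp: esol_def)
  obtain l z where z: "x < z" "z < e" "DERIV u z :> l" "u e - u x = (e - x) * l"
    using MVT[OF xe cu] du real_differentiable_def by meson
  have l: "l = H z - c - Q z / u z" using DERIV_unique[OF z(3) du[OF z(1,2)]] .
  have "u z < 0" using es z x by (auto simp: esol_def)
  moreover have "Q z \<ge> 0" using Qnn z x sab by auto
  ultimately have "Q z / u z \<le> 0" by (simp add: divide_nonneg_neg)
  moreover have "\<bar>H z - c\<bar> \<le> M" using M z x by auto
  ultimately have "l \<ge> - M" using l by linarith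
  hence "(e - x) * l \<ge> (e - x) * (- M)" using xe by (intro mult_left_mono) auto
  thus ?thesis using z(4) by (simp add: algebra_simps)
qed

end

lemma lip_clamp:
  fixes \<rho> x y :: real
  assumes "\<rho> > 0"
  shows "\<bar>- 1 / min x (-\<rho>) - - 1 / min y (-\<rho>)\<bar> \<le> (1 / \<rho>\<^sup>2) * \<bar>x - y\<bar>"
proof -
  define X where "X = min x (-\<rho>)"
  define Y where "Y = min y (-\<rho>)"
  have XY: "X \<le> -\<rho>" "Y \<le> -\<rho>" by (auto simp: X_def Y_def)
  hence nz: "X \<noteq> 0" "Y \<noteq> 0" using assms by auto
  have eq: "- 1 / X - - 1 / Y = (X - Y) / (X * Y)" using nz by (simp add: field_simps)
  have pr: "\<rho> * \<rho> \<le> (-X) * (-Y)" using XY assms by (intro mult_mono) auto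
  have d: "\<bar>X - Y\<bar> \<le> \<bar>x - y\<bar>" by (auto simp: X_def Y_def min_def)
  have "\<bar>(X - Y) / (X * Y)\<bar> = \<bar>X - Y\<bar> / (X * Y)" using pr assms
    by (simp add: abs_divide) (smt (verit) mult_pos_pos)
  also have "\<dots> \<le> \<bar>x - y\<bar> / (\<rho> * \<rho>)"
    using pr assms d by (intro frac_le) auto
  finally show ?thesis unfolding X_def[symmetric] Y_def[symmetric] eq
    by (simp add: power2_eq_square)
qed

context sing
begin

definition ES where
  "ES c s \<epsilon> u \<longleftrightarrow> continuous_on {s..b} u \<and> u b = - \<epsilon> \<and> (\<forall>t\<in>{s..b}. u t < 0) \<and>
     (\<forall>t\<in>{s..b}. (u has_real_derivative (H t - c - Q t / u t)) (at t within {s..b}))"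

lemma ES_esol: assumes "ES c s \<epsilon> u" "s \<le> s'" "s' < e" "e \<le> b" shows "esol c s' e u"
proof -
  have "continuous_on {s'..e} u" using assms by (auto simp: ES_def intro: continuous_on_subset)
  moreover have "u t < 0 \<and> (u has_real_derivative (H t - c - Q t / u t)) (at t)" if "t \<in> {s'<..<e}" for t
  proof -
    have "s < t" "t < b" using that assms by auto
    hence "at t within {s..b} = at t" by (rule at_within_Icc_at)
    moreover have "(u has_real_derivative (H t - c - Q t / u t)) (at t within {s..b})" "u t < 0"
      using assms(1) \<open>s < t\<close> \<open>t < b\<close> by (auto simp: ES_def)
    ultimately show ?thesis by simp
  qed
  ultimately show ?thesis by (simp add: esol_def)
qed

lemma esolve:
  assumes a': "a < a'" "a' < b" and eps: "\<epsilon> > 0"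
  shows "\<exists>u. ES c a' \<epsilon> u"
proof -
  have cHc: "continuous_on {a..b} (\<lambda>t. H t - c)" by (intro continuous_intros cH)
  obtain M where M: "M \<ge> 1" "\<And>t. t \<in> {a..b} \<Longrightarrow> \<bar>H t - c\<bar> \<le> M"
    using bound_on[OF cHc] by blast
  define b2 where "b2 = b - \<epsilon> / (2 * M)"
  define b1 where "b1 = max a' b2"
  have b2b: "b2 < b" using eps M by (simp add: b2_def)
  have b1: "a' \<le> b1" "b1 < b" using a' b2b by (auto simp: b1_def)
  obtain q0 where q0: "q0 > 0" "\<And>t. t \<in> {a'..b1} \<Longrightarrow> q0 \<le> Q t"
    using posmin[OF a'(1) b1] by blast
  define \<rho> where "\<rho> = min (\<epsilon>/2) (q0/M) / 2"
  have \<rho>: "\<rho> > 0" "\<rho> \<le> \<epsilon>/4" "\<rho> \<le> q0/(2*M)" using eps q0 M by (auto simp: \<rho>_def)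
  define \<phi> where "\<phi> z = - 1 / min z (-\<rho>)" for z
  have lip: "\<bar>\<phi> x - \<phi> y\<bar> \<le> (1 / \<rho>\<^sup>2) * \<bar>x - y\<bar>" for x y
    unfolding \<phi>_def by (rule lip_clamp[OF \<rho>(1)])
  have cA: "continuous_on {a'..b} (\<lambda>t. H t - c)" by (rule continuous_on_subset[OF cHc]) (use a' in auto)
  have cB: "continuous_on {a'..b} Q" by (rule continuous_on_subset[OF cQ]) (use a' in auto)
  obtain u where cu: "continuous_on {a'..b} u" and ub: "u b = - \<epsilon>"
    and du: "\<And>x. x \<in> {a'..b} \<Longrightarrow> (u has_real_derivative (H x - c + Q x * \<phi> (u x))) (at x within {a'..b})"
    using picard[OF a'(2) cA cB lip, of "- \<epsilon>"] \<rho>(1) by auto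
  have main: "\<forall>x\<in>{a'..b}. u x < - \<rho>"
  proof (rule ccontr)
    assume "\<not> (\<forall>x\<in>{a'..b}. u x < - \<rho>)"
    then obtain x1 where x1: "x1 \<in> {a'..b}" "u x1 \<ge> - \<rho>" by force
    define S where "S = {a'..b} \<inter> u -` {-\<rho>..}"
    have clS: "closed S" unfolding S_def by (rule continuous_closed_preimage[OF cu]) auto
    have x1S: "x1 \<in> S" using x1 by (simp add: S_def)
    have bdd: "bdd_above S" unfolding S_def by (auto intro: bdd_aboveI[of _ b])
    define s where "s = Sup S"
    have sS: "s \<in> S" unfolding s_def using closed_contains_Sup[OF _ bdd] clS x1S by auto
    have sab: "a' \<le> s" "s \<le> b" using sS by (auto simp: S_def)
    have us1: "u s \<ge> - \<rho>" using sS by (simp add: S_def)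
    have above: "u t < - \<rho>" if "s < t" "t \<le> b" for t
    proof (rule ccontr)
      assume "\<not> u t < - \<rho>"
      hence "t \<in> S" using that sab by (auto simp: S_def)
      hence "t \<le> s" unfolding s_def using bdd by (rule cSup_upper)
      thus False using that by simp
    qed
    have sb: "s < b" using sab us1 ub \<rho> eps by (cases "s = b") auto
    have us2: "u s \<le> - \<rho>"
    proof (rule ccontr)
      assume "\<not> u s \<le> - \<rho>"
      hence pos: "u s + \<rho> > 0" by simp
      have "continuous (at s within {a'..b}) u" using cu sab by (simp add: continuous_on_eq_continuous_within)
      then obtain d where d: "d > 0" "\<And>t. t \<in> {a'..b} \<Longrightarrow> dist t s < d \<Longrightarrow> dist (u t) (u s) < u s + \<rho>"
        using pos unfolding continuous_within_eps_delta by metis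
      define t where "t = min (s + d/2) b"
      have t: "s < t" "t \<le> b" "t \<in> {a'..b}" "dist t s < d" using d(1) sb sab by (auto simp: t_def dist_real_def)
      have "u t > - \<rho>" using d(2)[OF t(3,4)] by (auto simp: dist_real_def)
      thus False using above[OF t(1,2)] by simp
    qed
    have usr: "u s = - \<rho>" using us1 us2 by simp
    have es: "esol c s b u"
      unfolding esol_def
    proof (intro conjI ballI)
      show "continuous_on {s..b} u" by (rule continuous_on_subset[OF cu]) (use sab in auto)
      fix t assume t: "t \<in> {s<..<b}"
      show "u t < 0" using above[of t] t \<rho> by auto
      have "a' < t" "t < b" using t sab by auto
      hence at: "at t within {a'..b} = at t" by (rule at_within_Icc_at)
      have "min (u t) (- \<rho>) = u t" using above[of t] t by auto
      hence "H t - c + Q t * \<phi> (u t) = H t - c - Q t / u t" by (simp add: \<phi>_def)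
      thus "(u has_real_derivative (H t - c - Q t / u t)) (at t)"
        using du[of t] at t sab by auto
    qed
    have Ms: "\<And>t. t \<in> {s..b} \<Longrightarrow> \<bar>H t - c\<bar> \<le> M" using M sab a' by auto
    show False
    proof (cases "s \<ge> b2")
      case True
      have "- u s \<ge> - u b - M * (b - s)"
        using gen_lin[OF sb es _ order_refl Ms, of s] sab a' by auto
      moreover have "M * (b - s) \<le> \<epsilon> / 2"
      proof -
        have "b - s \<le> \<epsilon> / (2 * M)" using True by (simp add: b2_def)
        hence "M * (b - s) \<le> M * (\<epsilon> / (2 * M))" using M by (intro mult_left_mono) auto
        thus ?thesis using M by simp
      qed
      ultimately show False using usr ub \<rho> by linarith
    next
      case False
      hence sb2: "s < b2" by simp
      have b12: "b1 = b2" using sb2 sab by (simp add: b1_def)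
      have "- u b2 \<ge> - u b - M * (b - b2)"
        using gen_lin[OF sb es _ order_refl Ms, of b2] sab a' sb2 b2b by auto
      moreover have "M * (b - b2) = \<epsilon> / 2" using M by (simp add: b2_def)
      ultimately have ub2: "- u b2 \<ge> \<epsilon> / 2" using ub by linarith
      have es2: "esol c s b2 u" by (rule esol_sub[OF es order_refl sb2]) (use b2b in auto)
      have "(u b2)\<^sup>2 + 0 * b2 \<le> (u s)\<^sup>2 + 0 * s"
      proof (rule gen_sq[OF sb2 es2, where M = M and qq = q0 and r = "q0 / M"])
        show "a \<le> s" using sab a' by simp
        show "b2 \<le> b" using b2b by simp
        show "\<And>t. t \<in> {s..b2} \<Longrightarrow> \<bar>H t - c\<bar> \<le> M" using Ms b2b by auto
        show "\<And>t. t \<in> {s<..<b2} \<Longrightarrow> q0 \<le> Q t" using q0(2) sab b12 by auto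
        show "0 \<le> q0 / M" using q0 M by simp
        show "2 * M * (q0 / M) + 0 \<le> 2 * q0" using M by simp
        have "q0 / (2 * M) < q0 / M" using q0(1) M by (simp add: field_simps)
        hence "\<rho> < q0 / M" using \<rho>(3) by linarith
        hence "\<rho>\<^sup>2 < (q0/M)\<^sup>2" using \<rho>(1) by (simp add: power_strict_mono)
        thus "(u s)\<^sup>2 < (q0 / M)\<^sup>2" using usr by simp
      qed simp
      hence "(u b2)\<^sup>2 \<le> \<rho>\<^sup>2" using usr by simp
      moreover have "(\<epsilon>/2)\<^sup>2 \<le> (u b2)\<^sup>2"
        using power_mono[of "\<epsilon>/2" "- u b2" 2] ub2 eps by simp
      moreover have "\<rho>\<^sup>2 < (\<epsilon>/2)\<^sup>2" using \<rho> eps by (simp add: power_strict_mono)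
      ultimately show False by simp
    qed
  qed
  show ?thesis
  proof (intro exI[of _ u])
    show "ES c a' \<epsilon> u"
      unfolding ES_def
    proof (intro conjI ballI cu ub)
      fix t assume t: "t \<in> {a'..b}"
      show "u t < 0" using main t \<rho> by force
      have "min (u t) (- \<rho>) = u t" using main t by force
      hence "H t - c + Q t * \<phi> (u t) = H t - c - Q t / u t" by (simp add: \<phi>_def)
      thus "(u has_real_derivative (H t - c - Q t / u t)) (at t within {a'..b})" using du[OF t] by simp
    qed
  qed
qed

end

context sing
begin

lemma ES_cmp:
  assumes s: "a \<le> s" "s < b" and e1: "ES c s \<epsilon>1 u1" and e2: "ES c s \<epsilon>2 u2" and le: "\<epsilon>2 \<le> \<epsilon>1"
    and x: "x \<in> {s..b}"
  shows "u1 x \<le> u2 x"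
proof (rule gen_cmp[OF s(2) ES_esol[OF e1 order_refl s(2) order_refl] ES_esol[OF e2 order_refl s(2) order_refl] order_refl s(1) order_refl _ x])
  show "u1 b \<le> u2 b" using e1 e2 le by (simp add: ES_def)
qed

lemma rsol_right:
  assumes a': "a < a'" "a' < b"
  shows "\<exists>U. rsol c a' U"
proof -
  define E where "E n = inverse (real (Suc n))" for n
  have E0: "E n > 0" for n by (simp add: E_def)
  have Emono: "E (Suc n) \<le> E n" for n by (simp add: E_def field_simps)
  define un where "un n = (SOME u. ES c a' (E n) u)" for n
  have ES: "ES c a' (E n) (un n)" for n
  proof -
    have "\<exists>u. ES c a' (E n) u" by (rule esolve[OF a' E0])
    thus ?thesis unfolding un_def by (rule someI_ex)
  qed
  have neg: "un n x < 0" if "x \<in> {a'..b}" for n x using ES[of n] that by (simp add: ES_def)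
  have inc: "incseq (\<lambda>n. un n x)" if x: "x \<in> {a'..b}" for x
    by (rule incseq_SucI, rule ES_cmp[OF _ a'(2) ES ES Emono x]) (use a' in simp)
  define U where "U x = (SUP n. un n x)" for x
  have conv: "(\<lambda>n. un n x) \<longlonglongrightarrow> U x" if x: "x \<in> {a'..b}" for x
    unfolding U_def
  proof (rule LIMSEQ_incseq_SUP[OF _ inc[OF x]])
    show "bdd_above (range (\<lambda>n. un n x))"
      by (rule bdd_aboveI[of _ 0]) (use neg[OF x] in \<open>auto intro: less_imp_le\<close>)
  qed
  have unU: "un n x \<le> U x" if x: "x \<in> {a'..b}" for n x by (rule incseq_le[OF inc[OF x] conv[OF x]])
  have cHc: "continuous_on {a..b} (\<lambda>t. H t - c)" by (intro continuous_intros cH)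
  obtain M where M: "M \<ge> 1" "\<And>t. t \<in> {a..b} \<Longrightarrow> \<bar>H t - c\<bar> \<le> M"
    using bound_on[OF cHc] by blast
  obtain QM where QM: "QM \<ge> 1" "\<And>t. t \<in> {a..b} \<Longrightarrow> \<bar>Q t\<bar> \<le> QM"
    using bound_on[OF cQ] by blast
  have UB: "\<exists>\<eta>>0. \<forall>n. \<forall>t\<in>{a'..y}. un n t \<le> - \<eta>" if y: "a' \<le> y" "y < b" for y
  proof -
    define b' where "b' = (y + b) / 2"
    have b': "y < b'" "b' < b" using y by (auto simp: b'_def)
    have ab': "a' \<le> b'" using y b' by simp
    obtain q0 where q0: "q0 > 0" "\<And>t. t \<in> {a'..b'} \<Longrightarrow> q0 \<le> Q t"
      using posmin[OF a'(1) ab' b'(2)] by blast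
    define r where "r = q0 / (2 * M)"
    have r: "r > 0" "2 * M * r + q0 \<le> 2 * q0" using q0 M by (auto simp: r_def)
    define m2 where "m2 = min (r\<^sup>2) (q0 * (b' - y))"
    have m2: "m2 > 0" using r q0 b' by (simp add: m2_def)
    have sq: "(un n t)\<^sup>2 \<ge> m2" if t: "t \<in> {a'..y}" for n t
    proof (cases "(un n t)\<^sup>2 < r\<^sup>2")
      case True
      have tb': "t < b'" using t b' by auto
      have "(un n b')\<^sup>2 + q0 * b' \<le> (un n t)\<^sup>2 + q0 * t"
      proof (rule gen_sq[OF tb' ES_esol[OF ES]])
        show "a' \<le> t" "b' \<le> b" "a \<le> t" using t b' a' by auto
        show "\<And>s. s \<in> {t..b'} \<Longrightarrow> \<bar>H s - c\<bar> \<le> M" using M t a' b' by auto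
        show "\<And>s. s \<in> {t<..<b'} \<Longrightarrow> q0 \<le> Q s" using q0 t by auto
      qed (use r q0 True tb' b' in auto)
      moreover have "0 \<le> (un n b')\<^sup>2" by simp
      moreover have "q0 * (b' - t) = q0 * b' - q0 * t" by (simp add: right_diff_distrib)
      ultimately have "(un n t)\<^sup>2 \<ge> q0 * (b' - t)" by linarith
      moreover have "q0 * (b' - y) \<le> q0 * (b' - t)" using t q0 by (intro mult_left_mono) auto
      ultimately show ?thesis by (simp add: m2_def)
    next
      case False
      thus ?thesis by (simp add: m2_def)
    qed
    show ?thesis
    proof (intro exI[of _ "sqrt m2"] conjI allI ballI)
      show "sqrt m2 > 0" using m2 by simp
      fix n t assume t: "t \<in> {a'..y}"
      have "sqrt m2 \<le> sqrt ((un n t)\<^sup>2)" using sq[OF t] by (simp only: real_sqrt_le_iff)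
      hence "sqrt m2 \<le> \<bar>un n t\<bar>" by simp
      moreover have "un n t < 0" using neg t y by auto
      ultimately show "un n t \<le> - sqrt m2" by simp
    qed
  qed
  define G where "G t = H t - c - Q t / U t" for t
  have IE: "G integrable_on {x..y} \<and> U y - U x = integral {x..y} G" if xy: "a' \<le> x" "x \<le> y" "y < b" for x y
  proof -
    obtain \<eta> where \<eta>: "\<eta> > 0" "\<And>n t. t \<in> {a'..y} \<Longrightarrow> un n t \<le> - \<eta>" using UB[of y] xy by auto
    define g where "g n t = H t - c - Q t / un n t" for n t
    have sub: "{x..y} \<subseteq> {a'..b}" using xy by auto
    have hi: "(g n has_integral (un n y - un n x)) {x..y}" for n
    proof (rule fundamental_theorem_of_calculus[OF xy(2)])
      fix t assume t: "t \<in> {x..y}"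
      have "(un n has_real_derivative g n t) (at t within {a'..b})"
        using ES[of n] t sub by (auto simp: ES_def g_def)
      hence "(un n has_real_derivative g n t) (at t within {x..y})" by (rule DERIV_subset) (rule sub)
      thus "(un n has_vector_derivative g n t) (at t within {x..y})"
        by (simp add: has_real_derivative_iff_has_vector_derivative)
    qed
    have Ueta: "U t \<le> - \<eta>" if "t \<in> {x..y}" for t
      using LIMSEQ_le_const2[OF conv, of t "- \<eta>"] \<eta>(2) that xy sub by auto
    have dc: "G integrable_on {x..y} \<and> (\<lambda>k. integral {x..y} (g k)) \<longlonglongrightarrow> integral {x..y} G"
    proof (intro conjI; rule dominated_convergence[where h = "\<lambda>t. M + QM / \<eta>"])
      show "\<And>k. g k integrable_on {x..y}" using hi by blast
      show "\<And>k. g k integrable_on {x..y}" using hi by blast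
      show "(\<lambda>t. M + QM / \<eta>) integrable_on {x..y}" by (rule integrable_const_ivl)
      show "(\<lambda>t. M + QM / \<eta>) integrable_on {x..y}" by (rule integrable_const_ivl)
      have bnd: "norm (g k t) \<le> M + QM / \<eta>" if t: "t \<in> {x..y}" for k t
      proof -
        have ta: "t \<in> {a..b}" "t \<in> {a'..y}" using t xy a' by auto
        have ule: "un k t \<le> - \<eta>" using \<eta>(2) ta by auto
        have "\<bar>Q t / un k t\<bar> = \<bar>Q t\<bar> / \<bar>un k t\<bar>" by (simp add: abs_divide)
        also have "\<dots> \<le> QM / \<eta>" using QM(2)[OF ta(1)] ule \<eta>(1) QM(1)
          by (intro frac_le) auto
        finally have "\<bar>Q t / un k t\<bar> \<le> QM / \<eta>" .
        moreover have "\<bar>H t - c\<bar> \<le> M" using M ta by auto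
        moreover have "\<bar>H t - c - Q t / un k t\<bar> \<le> \<bar>H t - c\<bar> + \<bar>Q t / un k t\<bar>"
          by (rule abs_triangle_ineq4)
        ultimately show ?thesis unfolding g_def real_norm_def by linarith
      qed
      show "\<And>k t. t \<in> {x..y} \<Longrightarrow> norm (g k t) \<le> M + QM / \<eta>" by (rule bnd)
      show "\<And>k t. t \<in> {x..y} \<Longrightarrow> norm (g k t) \<le> M + QM / \<eta>" by (rule bnd)
      have cv: "(\<lambda>k. g k t) \<longlonglongrightarrow> G t" if t: "t \<in> {x..y}" for t
        unfolding g_def G_def
        using Ueta[OF t] \<eta>(1) conv[of t] t sub by (auto intro!: tendsto_intros)
      show "\<And>t. t \<in> {x..y} \<Longrightarrow> (\<lambda>k. g k t) \<longlonglongrightarrow> G t" by (rule cv)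
      show "\<And>t. t \<in> {x..y} \<Longrightarrow> (\<lambda>k. g k t) \<longlonglongrightarrow> G t" by (rule cv)
    qed
    have "(\<lambda>k. integral {x..y} (g k)) = (\<lambda>k. un k y - un k x)" using hi by (auto intro: integral_unique)
    moreover have "(\<lambda>k. un k y - un k x) \<longlonglongrightarrow> U y - U x"
      using conv xy a' by (auto intro!: tendsto_intros)
    ultimately have "(\<lambda>k. integral {x..y} (g k)) \<longlonglongrightarrow> U y - U x" by simp
    thus ?thesis using dc LIMSEQ_unique by blast
  qed
  have Ule0: "U t \<le> 0" if "t \<in> {a'..b}" for t
    using LIMSEQ_le_const2[OF conv[OF that], of 0] neg[OF that] by (auto intro: less_imp_le)
  have Ueta: "\<exists>\<eta>>0. \<forall>t\<in>{a'..y}. U t \<le> - \<eta>" if y: "a' \<le> y" "y < b" for y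
  proof -
    obtain \<eta> where \<eta>: "\<eta> > 0" "\<And>n t. t \<in> {a'..y} \<Longrightarrow> un n t \<le> - \<eta>" using UB[OF y] by auto
    have "U t \<le> - \<eta>" if "t \<in> {a'..y}" for t
      using LIMSEQ_le_const2[OF conv, of t "- \<eta>"] \<eta>(2) that y by auto
    thus ?thesis using \<eta>(1) by blast
  qed
  have Ucont: "continuous_on {a'..y} U" if y: "a' \<le> y" "y < b" for y
  proof -
    have Gi: "G integrable_on {a'..y}" using IE[of a' y] y by auto
    have "continuous_on {a'..y} (\<lambda>x. U y - integral {x..y} G)"
      by (intro continuous_intros indefinite_integral_continuous_1' Gi)
    moreover have "U y - integral {x..y} G = U x" if "x \<in> {a'..y}" for x
      using IE[of x y] that y by auto
    ultimately show ?thesis by (rule continuous_on_eq)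
  qed
  have Gcont: "continuous_on {a'..y} G" if y: "a' \<le> y" "y < b" for y
  proof -
    obtain \<eta> where \<eta>: "\<eta> > 0" "\<forall>t\<in>{a'..y}. U t \<le> - \<eta>" using Ueta[OF y] by auto
    have sub: "{a'..y} \<subseteq> {a..b}" using y a' by auto
    show ?thesis unfolding G_def
      by (intro continuous_intros continuous_on_subset[OF cH sub] continuous_on_subset[OF cQ sub] Ucont[OF y])
        (use \<eta> in force)
  qed
  have Uder: "(U has_real_derivative G x) (at x)" if x: "a' < x" "x < b" for x
  proof -
    define y where "y = (x + b) / 2"
    have y: "a' \<le> y" "y < b" "x < y" using x by (auto simp: y_def)
    have xin: "x \<in> {a'..y}" using x y by auto
    have d: "((\<lambda>s. U y - integral {s..y} G) has_real_derivative (0 - - G x)) (at x within {a'..y})"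
      by (intro derivative_intros integral_has_real_derivative' Gcont[OF y(1,2)] xin)
    have "(U has_real_derivative G x) (at x within {a'..y})"
      by (rule has_field_derivative_transform_within[OF d[simplified], of 1])
        (use xin y in \<open>auto simp: dist_real_def dest!: IE[of _ y]\<close>)
    moreover have "at x within {a'..y} = at x" using x y by (intro at_within_Icc_at) auto
    ultimately show ?thesis by simp
  qed
  have Ub: "U b = 0"
  proof -
    have "(\<lambda>n. un n b) = (\<lambda>n. - E n)" using ES by (auto simp: ES_def)
    moreover have "(\<lambda>n. - E n) \<longlonglongrightarrow> 0"
      using tendsto_minus[OF LIMSEQ_inverse_real_of_nat] by (simp add: E_def)
    ultimately show ?thesis using conv[of b] a' LIMSEQ_unique by fastforce
  qed
  have Uneg: "U t < 0" if "t \<in> {a'<..<b}" for t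
  proof -
    have "a' \<le> t" "t < b" using that by auto
    then obtain \<eta> where e: "\<eta> > 0" "\<forall>s\<in>{a'..t}. U s \<le> - \<eta>" using Ueta[of t] by blast
    have "U t \<le> - \<eta>" using e(2) \<open>a' \<le> t\<close> by auto
    thus ?thesis using e(1) by simp
  qed
  have Ucb: "continuous (at b within {a'..b}) U"
    unfolding continuous_within_eps_delta
  proof (intro allI impI)
    fix e :: real assume e: "e > 0"
    have "eventually (\<lambda>n. E n < e/2) sequentially"
      using order_tendstoD(2)[OF LIMSEQ_inverse_real_of_nat, of "e/2"] e by (simp add: E_def)
    then obtain n where n: "E n < e/2" by (auto simp: eventually_sequentially)
    have "continuous (at b within {a'..b}) (un n)"
      using ES[of n] a' by (simp add: ES_def continuous_on_eq_continuous_within)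
    then obtain d where d: "d > 0" "\<And>t. t \<in> {a'..b} \<Longrightarrow> dist t b < d \<Longrightarrow> dist (un n t) (un n b) < e/2"
      unfolding continuous_within_eps_delta using e by (metis half_gt_zero)
    show "\<exists>d>0. \<forall>x'\<in>{a'..b}. dist x' b < d \<longrightarrow> dist (U x') (U b) < e"
    proof (intro exI[of _ d] conjI ballI impI)
      show "d > 0" by (rule d(1))
      fix t assume t: "t \<in> {a'..b}" "dist t b < d"
      have "dist (un n t) (un n b) < e/2" by (rule d(2)[OF t])
      moreover have "un n b = - E n" using ES[of n] by (simp add: ES_def)
      ultimately have "\<bar>un n t + E n\<bar> < e/2" by (simp add: dist_real_def)
      hence "un n t > - e" using n by linarith
      moreover have "un n t \<le> U t" using unU t by auto
      moreover have "U t \<le> 0" using Ule0 t by auto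
      ultimately show "dist (U t) (U b) < e" using Ub by (auto simp: dist_real_def)
    qed
  qed
  have Ucall: "continuous_on {a'..b} U"
    unfolding continuous_on_eq_continuous_within
  proof
    fix x assume x: "x \<in> {a'..b}"
    show "continuous (at x within {a'..b}) U"
    proof (cases "x < b")
      case True
      define y where "y = (x + b) / 2"
      have y: "a' \<le> y" "y < b" "x < y" using x True by (auto simp: y_def)
      have "continuous (at x within {a'..y}) U"
        using Ucont[OF y(1,2)] x y by (simp add: continuous_on_eq_continuous_within)
      moreover have "at x within {a'..b} = at x within {a'..y}"
        by (rule at_within_nhd[of x "{..<y}"]) (use y in auto)
      ultimately show ?thesis by simp
    next
      case False
      hence "x = b" using x by simp
      thus ?thesis using Ucb by simp
    qed
  qed
  show ?thesis
  proof (intro exI[of _ U])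
    show "rsol c a' U" unfolding rsol_def
      using Ucall Ub Uneg Uder by (auto simp: G_def)
  qed
qed

end

context sing
begin

lemma rsol_sub: assumes "rsol c s u" "s \<le> s'" "s' < b" shows "rsol c s' u"
  using assms unfolding rsol_def by (auto intro: continuous_on_subset)

lemma exist: "\<exists>z. rsol c a z"
proof -
  define am where "am x = (a + x) / 2" for x
  define Ua where "Ua a' = (SOME U. rsol c a' U)" for a'
  have RS: "rsol c a' (Ua a')" if "a < a'" "a' < b" for a'
  proof -
    have "\<exists>U. rsol c a' U" by (rule rsol_right[OF that])
    thus ?thesis unfolding Ua_def by (rule someI_ex)
  qed
  define Z where "Z x = Ua (am x) x" for x
  have Zeq: "Z x = Ua a' x" if "a < a'" "a' \<le> x" "x \<le> b" "a' < b" for a' x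
  proof -
    have am: "a < am x" "am x < b" "am x \<le> x" using that by (auto simp: am_def)
    define m where "m = max a' (am x)"
    have m: "a \<le> m" "m < b" "a' \<le> m" "am x \<le> m" "m \<le> x" using that am by (auto simp: m_def)
    have "Ua (am x) x = Ua a' x"
      by (rule rsol_unique[OF m(1,2) rsol_sub[OF RS[OF am(1,2)] m(4,2)] rsol_sub[OF RS[OF that(1,4)] m(3,2)]])
        (use m that in auto)
    thus ?thesis by (simp add: Z_def)
  qed
  have ZcontI: "continuous_on {a'..b} Z" if "a < a'" "a' < b" for a'
  proof -
    have "continuous_on {a'..b} (Ua a')" using RS[OF that] by (simp add: rsol_def)
    thus ?thesis by (rule continuous_on_eq) (use Zeq that in auto)
  qed
  have Zder: "(Z has_real_derivative (H x - c - Q x / Z x)) (at x)" if x: "a < x" "x < b" for x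
  proof -
    define a' where "a' = am x"
    have a': "a < a'" "a' < x" "a' < b" using x by (auto simp: a'_def am_def)
    have "(Ua a' has_real_derivative (H x - c - Q x / Ua a' x)) (at x)"
      using RS[OF a'(1,3)] a' x by (simp add: rsol_def)
    moreover have "Ua a' x = Z x" using Zeq[of a' x] a' x by simp
    ultimately have d: "(Ua a' has_real_derivative (H x - c - Q x / Z x)) (at x)" by simp
    show ?thesis
      by (rule has_field_derivative_transform_within_open[OF d, of "{a'<..<b}"])
        (use a' x Zeq in auto)
  qed
  have Zneg: "Z x < 0" if "a < x" "x < b" for x
  proof -
    have "Ua (am x) x < 0" using RS[of "am x"] that by (auto simp: am_def rsol_def)
    thus ?thesis by (simp add: Z_def)
  qed
  have Zb: "Z b = 0"
  proof -
    have "Ua (am b) b = 0" using RS[of "am b"] ab by (auto simp: am_def rsol_def)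
    thus ?thesis by (simp add: Z_def)
  qed
  have cHc: "continuous_on {a..b} (\<lambda>t. H t - c)" by (intro continuous_intros cH)
  obtain M where M: "M \<ge> 1" "\<And>t. t \<in> {a..b} \<Longrightarrow> \<bar>H t - c\<bar> \<le> M"
    using bound_on[OF cHc] by blast
  obtain QM where QM: "QM \<ge> 1" "\<And>t. t \<in> {a..b} \<Longrightarrow> \<bar>Q t\<bar> \<le> QM"
    using bound_on[OF cQ] by blast
  have LB: "Z x0 \<ge> - (QM + 1) - (M + 1) * (b - x0)" if x0: "a < x0" "x0 < b" for x0
  proof (rule ccontr)
    assume "\<not> ?thesis"
    hence lt: "Z x0 - (M + 1) * x0 < - (QM + 1) - (M + 1) * b" by (simp add: algebra_simps)
    define v where "v t = Z t - (M + 1) * t" for t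
    define v' where "v' t = (H t - c - Q t / Z t) - (M + 1)" for t
    have "v b \<le> v x0"
    proof (rule key_nonincr[of x0 b v v' "- (QM + 1) - (M + 1) * b"])
      show "x0 \<le> b" using x0 by simp
      have "continuous_on {am x0..b} Z" using ZcontI[of "am x0"] x0 by (simp add: am_def)
      hence "continuous_on {x0..b} Z" by (rule continuous_on_subset) (use x0 in \<open>auto simp: am_def\<close>)
      thus "continuous_on {x0..b} v" unfolding v_def by (intro continuous_intros)
      fix t assume t: "x0 < t" "t < b"
      show "(v has_real_derivative v' t) (at t)" unfolding v_def v'_def
        using Zder[of t] t x0 by (auto intro!: derivative_eq_intros)
      assume vt: "v t < - (QM + 1) - (M + 1) * b"
      have "(M + 1) * t \<le> (M + 1) * b" using t M by (intro mult_left_mono) auto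
      hence Zt: "Z t < - (QM + 1)" using vt by (simp add: v_def)
      have ta: "t \<in> {a..b}" using t x0 by auto
      have "Q t \<le> QM" using QM(2)[OF ta] by simp
      hence Qlt: "Q t < - Z t" using Zt by simp
      have pos: "- Z t > 0" using Zt QM by linarith
      have "Q t / (- Z t) < (- Z t) / (- Z t)" by (rule divide_strict_right_mono[OF Qlt pos])
      hence "- (Q t / Z t) < 1" using pos by simp
      moreover have "H t - c \<le> M" using M(2)[OF ta] by simp
      ultimately show "v' t \<le> 0" by (simp add: v'_def)
    qed (use lt v_def in simp)
    thus False using lt Zb QM(1) by (simp add: v_def)
  qed
  have Mono: "Z s + M * s \<le> Z t + M * t" if st: "a < s" "s < t" "t \<le> b" for s t
  proof -
    have "continuous_on {am s..b} Z" using ZcontI[of "am s"] st by (simp add: am_def)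
    hence cZ: "continuous_on {s..t} Z" by (rule continuous_on_subset) (use st in \<open>auto simp: am_def\<close>)
    have dZ: "(Z has_real_derivative (H x - c - Q x / Z x)) (at x)" if "s < x" "x < t" for x
      using Zder that st by auto
    obtain l z where z: "s < z" "z < t" "DERIV Z z :> l" "Z t - Z s = (t - s) * l"
      using MVT[OF st(2) cZ] dZ real_differentiable_def by meson
    have l: "l = H z - c - Q z / Z z" using DERIV_unique[OF z(3) dZ[OF z(1,2)]] .
    have za: "z \<in> {a..b}" "a < z" "z < b" using z st by auto
    have "Q z / Z z \<le> 0" using Zneg[OF za(2,3)] Qnn[OF za(1)] by (simp add: divide_nonneg_neg)
    moreover have "\<bar>H z - c\<bar> \<le> M" using M za by auto
    ultimately have "l \<ge> - M" using l by linarith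
    hence "(t - s) * l \<ge> (t - s) * (- M)" using st by (intro mult_left_mono) auto
    thus ?thesis using z(4) by (simp add: algebra_simps)
  qed
  define W where "W = (\<lambda>t. Z t + M * t) ` {a<..<b}"
  have Wne: "W \<noteq> {}" using ab by (auto simp: W_def)
  have Wbdd: "bdd_below W"
  proof (rule bdd_belowI[of _ "- (QM + 1) - (M + 1) * (b - a) + M * a"])
    fix w assume "w \<in> W"
    then obtain t where t: "a < t" "t < b" "w = Z t + M * t" by (auto simp: W_def)
    have "(M + 1) * (b - t) \<le> (M + 1) * (b - a)" using t M by (intro mult_left_mono) auto
    moreover have "M * a \<le> M * t" using t M by (intro mult_left_mono) auto
    ultimately show "- (QM + 1) - (M + 1) * (b - a) + M * a \<le> w" using LB[OF t(1,2)] t(3) by linarith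
  qed
  define L0 where "L0 = Inf W"
  have L0le: "L0 \<le> Z t + M * t" if "a < t" "t < b" for t
    unfolding L0_def using Wbdd that by (intro cInf_lower) (auto simp: W_def)
  define \<zeta> where "\<zeta> x = (if x = a then L0 - M * a else Z x)" for x
  have cza: "continuous (at a within {a..b}) \<zeta>"
    unfolding continuous_within_eps_delta
  proof (intro allI impI)
    fix e :: real assume e: "e > 0"
    have "Inf W < L0 + e/2" using e by (simp add: L0_def)
    then obtain w where w: "w \<in> W" "w < L0 + e/2" using cInf_lessD[OF Wne] by blast
    then obtain t1 where t1: "a < t1" "t1 < b" "Z t1 + M * t1 < L0 + e/2" by (auto simp: W_def)
    define d where "d = min (t1 - a) (e / (2 * (M + 1)))"
    have d: "d > 0" using t1 e M by (simp add: d_def)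
    show "\<exists>d>0. \<forall>x'\<in>{a..b}. dist x' a < d \<longrightarrow> dist (\<zeta> x') (\<zeta> a) < e"
    proof (intro exI[of _ d] conjI ballI impI d)
      fix t assume t: "t \<in> {a..b}" "dist t a < d"
      show "dist (\<zeta> t) (\<zeta> a) < e"
      proof (cases "t = a")
        case True thus ?thesis using e by simp
      next
        case False
        hence ta: "a < t" "t < t1" using t by (auto simp: d_def dist_real_def)
        have "Z t + M * t \<le> Z t1 + M * t1"
          by (rule Mono) (use ta t1 in auto)
        moreover have "L0 \<le> Z t + M * t" using L0le[of t] ta t1 by auto
        moreover have "M * (t - a) \<le> M * (e / (2 * (M + 1)))"
          using ta t(2) M by (intro mult_left_mono) (auto simp: d_def dist_real_def)
        moreover have "M * (e / (2 * (M + 1))) < e / 2"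
          using M e by (simp add: field_simps)
        ultimately have X: "0 \<le> Z t + M * t - L0" "Z t + M * t - L0 < e/2"
          and Y: "M * (t - a) < e/2" using t1 by linarith+
        have Y0: "0 \<le> M * (t - a)" using M ta by simp
        have "\<bar>(Z t + M * t - L0) - M * (t - a)\<bar> < e"
          by (simp only: abs_less_iff) (intro conjI; use X Y Y0 in linarith)
        thus ?thesis using False by (simp add: \<zeta>_def dist_real_def algebra_simps)
      qed
    qed
  qed
  have czx: "continuous (at x within {a..b}) \<zeta>" if x: "a < x" "x \<le> b" for x
  proof -
    define a' where "a' = am x"
    have a': "a < a'" "a' < x" "a' < b" using x by (auto simp: a'_def am_def)
    have "continuous_on {a'..b} \<zeta>"
      by (rule continuous_on_eq[OF ZcontI[OF a'(1,3)]]) (use a' in \<open>auto simp: \<zeta>_def\<close>)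
    hence "continuous (at x within {a'..b}) \<zeta>" using x a' by (simp add: continuous_on_eq_continuous_within)
    moreover have "at x within {a..b} = at x within {a'..b}"
      by (rule at_within_nhd[of x "{a'<..}"]) (use a' in auto)
    ultimately show ?thesis by simp
  qed
  have "rsol c a \<zeta>"
    unfolding rsol_def
  proof (intro conjI ballI)
    show "continuous_on {a..b} \<zeta>"
      unfolding continuous_on_eq_continuous_within
    proof
      fix x assume "x \<in> {a..b}"
      thus "continuous (at x within {a..b}) \<zeta>" using cza czx by (cases "x = a") auto
    qed
    show "\<zeta> b = 0" using Zb ab by (simp add: \<zeta>_def)
    fix t assume t: "t \<in> {a<..<b}"
    show "\<zeta> t < 0" using Zneg t by (simp add: \<zeta>_def)
    have "(Z has_real_derivative (H t - c - Q t / \<zeta> t)) (at t)" using Zder[of t] t by (simp add: \<zeta>_def)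
    thus "(\<zeta> has_real_derivative (H t - c - Q t / \<zeta> t)) (at t)"
      by (rule has_field_derivative_transform_within_open[of _ _ _ "{a<..<b}"]) (use t in \<open>auto simp: \<zeta>_def\<close>)
  qed
  thus ?thesis by blast
qed


lemma T1:
  assumes r: "rsol c a z" and neg: "z a < 0"
  shows "ereal c < cstar Q H a b"
proof -
  define c' where "c' = c + (- z a) / (2 * (b - a))"
  have "- z a / (2 * (b - a)) > 0" using neg ab by (intro divide_pos_pos) auto
  hence cc: "c < c'" by (simp add: c'_def)
  obtain z' where r': "rsol c' a z'" using exist by blast
  have "z' a - z a \<le> (c' - c) * (b - a)" using rsol_lip[OF r r'] cc by simp
  also have "\<dots> = - z a / 2" using ab by (simp add: c'_def field_simps)
  finally have "z' a < 0" using neg by simp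
  hence "ereal c' \<in> {ereal c | c. \<exists>\<zeta>. zeta_sol Q H a b c \<zeta> \<and> \<zeta> a < 0}"
    using r' by (auto simp: zeta_rsol)
  hence "ereal c' \<le> cstar Q H a b" unfolding cstar_def by (rule Sup_upper)
  moreover have "ereal c < ereal c'" using cc by simp
  ultimately show ?thesis by (metis less_le_trans)
qed

lemma T2:
  assumes r: "rsol c a z" and lt: "ereal c < cstar Q H a b"
  shows "z a < 0"
proof -
  obtain e where "e \<in> {ereal c | c. \<exists>\<zeta>. zeta_sol Q H a b c \<zeta> \<and> \<zeta> a < 0}" "ereal c < e"
    using lt unfolding cstar_def less_Sup_iff by blast
  then obtain c' z' where c': "c < c'" "rsol c' a z'" "z' a < 0"
    by (auto simp: zeta_rsol)
  have "z a \<le> z' a" using rsol_cmp[OF order_refl ab r c'(2)] c'(1) ab by auto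
  thus ?thesis using c'(3) by simp
qed

end

lemma deriv_join:
  fixes f f' :: "real \<Rightarrow> real"
  assumes x: "a < x" "x < b" and cf: "continuous_on {a..b} f" and cf': "continuous_on {a..b} f'"
    and d: "\<And>t. a < t \<Longrightarrow> t < b \<Longrightarrow> t \<noteq> x \<Longrightarrow> (f has_real_derivative f' t) (at t)"
  shows "(f has_real_derivative f' x) (at x)"
  unfolding has_field_derivative_iff tendsto_iff
proof (intro allI impI)
  fix e :: real assume e: "e > 0"
  have "continuous (at x within {a..b}) f'" using cf' x by (simp add: continuous_on_eq_continuous_within)
  then obtain d1 where d1: "d1 > 0" "\<And>s. s \<in> {a..b} \<Longrightarrow> dist s x < d1 \<Longrightarrow> dist (f' s) (f' x) < e"
    unfolding continuous_within_eps_delta using e by metis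
  define d where "d = min d1 (min (x - a) (b - x))"
  have dpos: "d > 0" using d1 x by (simp add: d_def)
  show "eventually (\<lambda>t. dist ((f t - f x) / (t - x)) (f' x) < e) (at x)"
    unfolding eventually_at
  proof (intro exI[of _ d] conjI ballI impI dpos)
    fix t assume "t \<in> UNIV" and t: "t \<noteq> x \<and> dist t x < d"
    hence tx: "t \<noteq> x" "\<bar>t - x\<bar> < d" by (auto simp: dist_real_def)
    have tab: "a < t" "t < b" using tx x by (auto simp: d_def)
    show "dist ((f t - f x) / (t - x)) (f' x) < e"
    proof (cases "t > x")
      case True
      have c: "continuous_on {x..t} f" by (rule continuous_on_subset[OF cf]) (use tab x in auto)
      obtain l z where z: "x < z" "z < t" "DERIV f z :> l" "f t - f x = (t - x) * l"
        using MVT[OF True c] d[of] tab x real_differentiable_def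
        by (metis (no_types, lifting) less_trans order.strict_trans2 less_irrefl)
      have "l = f' z" using DERIV_unique[OF z(3) d[of z]] z tab x by auto
      hence "(f t - f x) / (t - x) = f' z" using z(4) True by simp
      moreover have "dist (f' z) (f' x) < e" using d1(2)[of z] z tab x tx by (auto simp: d_def dist_real_def)
      ultimately show ?thesis by simp
    next
      case False
      hence tlt: "t < x" using tx by simp
      have c: "continuous_on {t..x} f" by (rule continuous_on_subset[OF cf]) (use tab x in auto)
      obtain l z where z: "t < z" "z < x" "DERIV f z :> l" "f x - f t = (x - t) * l"
        using MVT[OF tlt c] d[of] tab x real_differentiable_def
        by (metis (no_types, lifting) less_trans order.strict_trans2 less_irrefl)
      have "l = f' z" using DERIV_unique[OF z(3) d[of z]] z tab x by auto
      hence "(f t - f x) / (t - x) = f' z" using z(4) tlt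
        by (simp add: field_simps)
      moreover have "dist (f' z) (f' x) < e" using d1(2)[of z] z tab x tx by (auto simp: d_def dist_real_def)
      ultimately show ?thesis by simp
    qed
  qed
qed

context sing
begin

definition V where "V c = (SOME z. rsol c a z) a"

lemma V_sol: "rsol c a (SOME z. rsol c a z)"
  using exist[of c] by (rule someI_ex)

lemma V_any: assumes "rsol c a z" shows "V c = z a"
  unfolding V_def using rsol_unique[OF order_refl ab V_sol assms] ab by auto

lemma V_le0: "V c \<le> 0"
  unfolding V_def by (rule rsol_nonpos[OF V_sol ab]) (use ab in auto)

lemma V_mono: "x \<le> y \<Longrightarrow> V x \<le> V y"
  unfolding V_def by (rule rsol_cmp[OF order_refl ab V_sol V_sol]) (use ab in auto)

lemma V_lip: "\<bar>V x - V y\<bar> \<le> (b - a) * \<bar>x - y\<bar>"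
proof (cases "x \<le> y")
  case True
  have "V y - V x \<le> (y - x) * (b - a)" unfolding V_def by (rule rsol_lip[OF V_sol V_sol True])
  thus ?thesis using V_mono[OF True] True by (simp add: abs_if mult.commute)
next
  case False
  hence yx: "y \<le> x" by simp
  have "V x - V y \<le> (x - y) * (b - a)" unfolding V_def by (rule rsol_lip[OF V_sol V_sol yx])
  thus ?thesis using V_mono[OF yx] yx by (simp add: abs_if mult.commute)
qed

lemma V_cont: "continuous_on S V"
  by (rule lip_cont[of V "b - a"]) (use V_lip ab in auto)

lemma V_neg_iff: "V c < 0 \<longleftrightarrow> ereal c < cstar Q H a b"
  using T1[OF V_sol] T2[OF V_sol] unfolding V_def by blast

lemma V_bnd: assumes "\<And>x. x \<in> {a..b} \<Longrightarrow> m \<le> H x" shows "V c \<le> - (m - c) * (b - a)"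
  unfolding V_def by (rule rsol_bnd[OF V_sol assms])

end

locale setting =
  fixes \<gamma> \<alpha> :: real and f h D D' g q :: "real \<Rightarrow> real"
  assumes g0: "0 < \<gamma>" and ga: "\<gamma> < \<alpha>" and a1: "\<alpha> < 1"
    and Cf: "C1_on 0 1 f h" and CD: "C1_on 0 1 D D'"
    and Dp: "\<forall>x\<in>{0<..<\<alpha>}. D x > 0" and Dn: "\<forall>x\<in>{\<alpha><..<1}. D x < 0"
    and cg: "continuous_on {0..1} g"
    and gn: "\<forall>x\<in>{0<..<\<gamma>}. g x < 0" and gp: "\<forall>x\<in>{\<gamma><..<1}. g x > 0"
    and g0': "g 0 = 0" and g\<gamma>: "g \<gamma> = 0" and g1: "g 1 = 0"
    and qdef: "q = (\<lambda>x. D x * g x)"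
begin

lemma ch: "continuous_on {0..1} h" using Cf by (simp add: C1_on_def)

lemma cD: "continuous_on {0..1} D"
  unfolding continuous_on_eq_continuous_within
  using CD by (auto simp: C1_on_def intro: DERIV_continuous)

lemma cq: "continuous_on {0..1} q" unfolding qdef by (intro continuous_intros cD cg)

lemma q\<gamma>: "q \<gamma> = 0" by (simp add: qdef g\<gamma>)

lemma cont_refl:
  fixes u :: "real \<Rightarrow> real" and s e :: real
  assumes "continuous_on {0..1} u" "0 \<le> s" "e \<le> 1"
  shows "continuous_on {1 - e..1 - s} (\<lambda>\<phi>. u (1 - \<phi>))"
proof -
  have "continuous_on {1 - e..1 - s} (\<lambda>\<phi>. 1 - \<phi>)" by (rule continuous_on_op_minus)
  thus ?thesis by (rule continuous_on_compose2[OF assms(1)]) (use assms in auto)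
qed

sublocale R: sing \<gamma> \<alpha> h q
proof
  show "\<gamma> < \<alpha>" by (rule ga)
  show "continuous_on {\<gamma>..\<alpha>} h" by (rule continuous_on_subset[OF ch]) (use g0 ga a1 in auto)
  show "continuous_on {\<gamma>..\<alpha>} q" by (rule continuous_on_subset[OF cq]) (use g0 ga a1 in auto)
  fix x assume x: "\<gamma> < x" "x < \<alpha>"
  have "D x > 0" "g x > 0" using Dp gp x g0 ga a1 by auto
  thus "q x > 0" by (simp add: qdef)
qed

sublocale L: sing "1 - \<gamma>" 1 "\<lambda>\<phi>. - h (1 - \<phi>)" "\<lambda>\<phi>. - q (1 - \<phi>)"
proof
  show "1 - \<gamma> < 1" using g0 by simp
  show "continuous_on {1 - \<gamma>..1} (\<lambda>\<phi>. - h (1 - \<phi>))"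
    using cont_refl[OF ch, of 0 \<gamma>] g0 ga a1 by (intro continuous_intros) auto
  show "continuous_on {1 - \<gamma>..1} (\<lambda>\<phi>. - q (1 - \<phi>))"
    using cont_refl[OF cq, of 0 \<gamma>] g0 ga a1 by (intro continuous_intros) auto
  fix x assume x: "1 - \<gamma> < x" "x < 1"
  have "D (1 - x) > 0" "g (1 - x) < 0" using Dp gn x g0 ga a1 by auto
  hence "D (1 - x) * g (1 - x) < 0" by (simp add: mult_pos_neg)
  thus "- q (1 - x) > 0" by (simp add: qdef)
qed

sublocale T: sing 0 "1 - \<alpha>" "\<lambda>\<phi>. h (1 - \<phi>)" "\<lambda>\<phi>. - q (1 - \<phi>)"
proof
  show "0 < 1 - \<alpha>" using a1 by simp
  show "continuous_on {0..1 - \<alpha>} (\<lambda>\<phi>. h (1 - \<phi>))"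
    using cont_refl[OF ch, of \<alpha> 1] g0 ga a1 by auto
  show "continuous_on {0..1 - \<alpha>} (\<lambda>\<phi>. - q (1 - \<phi>))"
    using cont_refl[OF cq, of \<alpha> 1] g0 ga a1 by (intro continuous_intros) auto
  fix x assume x: "0 < x" "x < 1 - \<alpha>"
  have "D (1 - x) < 0" "g (1 - x) > 0" using Dn gp x g0 ga a1 by auto
  hence "D (1 - x) * g (1 - x) < 0" by (simp add: mult_neg_pos)
  thus "- q (1 - x) > 0" by (simp add: qdef)
qed

lemma P2one: assumes "probP \<alpha> h q c z" shows "prob1 \<alpha> h q c z"
  using assms a1 unfolding probP_def prob1_def
  by (auto intro: continuous_on_subset)

lemma one2R: assumes "prob1 \<alpha> h q c z" shows "R.rsol c \<gamma> z"
  using assms g0 ga unfolding prob1_def R.rsol_def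
  by (auto intro: continuous_on_subset)

lemma refl_deriv:
  fixes z :: "real \<Rightarrow> real"
  assumes "(z has_real_derivative d) (at (1 - x))"
  shows "((\<lambda>\<phi>. z (1 - \<phi>)) has_real_derivative (- d)) (at x)"
proof -
  have "((\<lambda>\<phi>. z (1 - \<phi>)) has_real_derivative d * (-1)) (at x)"
    by (rule DERIV_chain2[where f = z and g = "\<lambda>\<phi>. 1 - \<phi>"]) (use assms in \<open>auto intro!: derivative_eq_intros\<close>)
  thus ?thesis by simp
qed

lemma one2L: assumes p: "prob1 \<alpha> h q c z" shows "L.rsol (- c) (1 - \<gamma>) (\<lambda>\<phi>. z (1 - \<phi>))"
  unfolding L.rsol_def
proof (intro conjI ballI)
  have "continuous_on {0..\<alpha>} z" using p by (simp add: prob1_def)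
  thus "continuous_on {1 - \<gamma>..1} (\<lambda>\<phi>. z (1 - \<phi>))"
    by (rule continuous_on_compose2) (use g0 ga in \<open>auto intro!: continuous_intros\<close>)
  show "z (1 - 1) = 0" using p by (simp add: prob1_def)
  fix t assume t: "t \<in> {1 - \<gamma><..<1}"
  have x: "1 - t \<in> {0<..<\<alpha>}" using t ga by auto
  show "z (1 - t) < 0" using p x by (simp add: prob1_def)
  have "(z has_real_derivative (h (1 - t) - c - q (1 - t) / z (1 - t))) (at (1 - t))"
    using p x by (simp add: prob1_def)
  from refl_deriv[OF this]
  show "((\<lambda>\<phi>. z (1 - \<phi>)) has_real_derivative (- h (1 - t) - - c - - q (1 - t) / z (1 - t))) (at t)"
    by (simp add: algebra_simps)
qed

lemma P2T: assumes p: "probP \<alpha> h q c z" shows "T.rsol c 0 (\<lambda>\<phi>. - z (1 - \<phi>))"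
  unfolding T.rsol_def
proof (intro conjI ballI)
  have "continuous_on {0..1} z" using p by (simp add: probP_def)
  hence "continuous_on {0..1 - \<alpha>} (\<lambda>\<phi>. z (1 - \<phi>))"
    by (rule continuous_on_compose2) (use a1 g0 ga in \<open>auto intro!: continuous_intros\<close>)
  thus "continuous_on {0..1 - \<alpha>} (\<lambda>\<phi>. - z (1 - \<phi>))" by (intro continuous_intros)
  show "- z (1 - (1 - \<alpha>)) = 0" using p by (simp add: probP_def)
  fix t assume t: "t \<in> {0<..<1 - \<alpha>}"
  have x: "1 - t \<in> {\<alpha><..<1}" using t by auto
  show "- z (1 - t) < 0" using p x by (simp add: probP_def)
  have x2: "1 - t \<in> {0<..<1} - {\<alpha>}" using x ga g0 by auto
  have "(z has_real_derivative (h (1 - t) - c - q (1 - t) / z (1 - t))) (at (1 - t))"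
    using p x2 unfolding probP_def by blast
  from DERIV_minus[OF refl_deriv[OF this]]
  show "((\<lambda>\<phi>. - z (1 - \<phi>)) has_real_derivative (h (1 - t) - c - - q (1 - t) / - z (1 - t))) (at t)"
    by (simp add: algebra_simps)
qed

end

context setting
begin

lemma U1_lt:
  assumes p1: "prob1 \<alpha> h q c1 z1" and p2: "prob1 \<alpha> h q c2 z2" and lt: "c1 < c2"
  shows False
proof -
  have r1: "R.rsol c1 \<gamma> z1" and r2: "R.rsol c2 \<gamma> z2" using one2R p1 p2 by auto
  have cmpR: "z1 x \<le> z2 x" if "x \<in> {\<gamma>..\<alpha>}" for x
    by (rule R.rsol_cmp[OF order_refl ga r1 r2 _ that]) (use lt in linarith)
  have l1: "L.rsol (- c1) (1 - \<gamma>) (\<lambda>\<phi>. z1 (1 - \<phi>))" and l2: "L.rsol (- c2) (1 - \<gamma>) (\<lambda>\<phi>. z2 (1 - \<phi>))"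
    using one2L p1 p2 by auto
  have "z2 (1 - (1 - \<gamma>)) \<le> z1 (1 - (1 - \<gamma>))"
    by (rule L.rsol_cmp[OF order_refl L.ab l2 l1, of "1 - \<gamma>"]) (use lt g0 in simp_all)
  hence eq: "z1 \<gamma> = z2 \<gamma>" using cmpR[of \<gamma>] ga by simp
  have x: "\<gamma> \<in> {0<..<\<alpha>}" using g0 ga by simp
  have d1: "(z1 has_real_derivative (h \<gamma> - c1 - q \<gamma> / z1 \<gamma>)) (at \<gamma>)"
    and d2: "(z2 has_real_derivative (h \<gamma> - c2 - q \<gamma> / z2 \<gamma>)) (at \<gamma>)"
    using p1 p2 x by (auto simp: prob1_def)
  have dw: "((\<lambda>t. z2 t - z1 t) has_real_derivative (c1 - c2)) (at \<gamma>)"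
    using DERIV_diff[OF d2 d1] by (simp add: q\<gamma>)
  have neg: "c1 - c2 < 0" using lt by simp
  from DERIV_neg_dec_right[OF dw neg] obtain d where
    d: "d > 0" "\<forall>hh>0. hh < d \<longrightarrow> z2 \<gamma> - z1 \<gamma> > z2 (\<gamma> + hh) - z1 (\<gamma> + hh)"
    by blast
  define hh where "hh = min (d/2) ((\<alpha> - \<gamma>)/2)"
  have h1: "hh \<le> (\<alpha> - \<gamma>)/2" "hh \<le> d/2" unfolding hh_def by (rule min.cobounded2, rule min.cobounded1)
  have hh: "hh > 0" "hh < d" "\<gamma> + hh \<in> {\<gamma>..\<alpha>}" using d(1) ga h1 by (auto simp: hh_def)
  have "z2 \<gamma> - z1 \<gamma> > z2 (\<gamma> + hh) - z1 (\<gamma> + hh)" using d(2) hh(1,2) by blast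
  hence "z2 (\<gamma> + hh) < z1 (\<gamma> + hh)" using eq by simp
  thus False using cmpR[OF hh(3)] by simp
qed

lemma U1: assumes "prob1 \<alpha> h q c1 z1" "prob1 \<alpha> h q c2 z2" shows "c1 = c2"
  using U1_lt[OF assms] U1_lt[OF assms(2,1)] by (cases c1 c2 rule: linorder_cases) auto

lemma Uz1:
  assumes p1: "prob1 \<alpha> h q c z1" and p2: "prob1 \<alpha> h q c z2" and x: "x \<in> {0..\<alpha>}"
  shows "z1 x = z2 x"
proof (cases "x \<ge> \<gamma>")
  case True
  show ?thesis by (rule R.rsol_unique[OF order_refl ga one2R[OF p1] one2R[OF p2]]) (use True x in auto)
next
  case False
  have "z1 (1 - (1 - x)) = z2 (1 - (1 - x))"
    by (rule L.rsol_unique[OF order_refl L.ab one2L[OF p1] one2L[OF p2], of "1 - x"]) (use False x in auto)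
  thus ?thesis by simp
qed

lemma The1: assumes "prob1 \<alpha> h q c z" shows "c1star \<alpha> h q = c"
  unfolding c1star_def
  by (rule the_equality) (use assms U1 in blast)+

lemma ConsE:
  assumes rR: "R.rsol c \<gamma> zR" and rL: "L.rsol (- c) (1 - \<gamma>) zL" and eq: "zL (1 - \<gamma>) = zR \<gamma>" and neg: "zR \<gamma> < 0"
  shows "\<exists>z. prob1 \<alpha> h q c z"
proof -
  define z where "z x = (if x \<le> \<gamma> then zL (1 - x) else zR x)" for x
  have cz: "continuous_on {0..\<alpha>} z"
    unfolding z_def
  proof (rule continuous_on_cases_le[where h = "\<lambda>x. x" and a = \<gamma>])
    have s1: "{x \<in> {0..\<alpha>}. x \<le> \<gamma>} = {0..\<gamma>}" using ga by auto
    have c1: "continuous_on {1 - \<gamma>..1} zL" using rL by (simp add: L.rsol_def)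
    have "continuous_on {0..\<gamma>} (\<lambda>x. zL (1 - x))"
      by (rule continuous_on_compose2[OF c1 continuous_on_op_minus]) auto
    thus "continuous_on {x \<in> {0..\<alpha>}. x \<le> \<gamma>} (\<lambda>x. zL (1 - x))" using s1 by simp
    have s2: "{x \<in> {0..\<alpha>}. \<gamma> \<le> x} = {\<gamma>..\<alpha>}" using g0 by auto
    show "continuous_on {x \<in> {0..\<alpha>}. \<gamma> \<le> x} zR" using rR s2 by (simp add: R.rsol_def)
  qed (use eq in \<open>auto intro: continuous_on_id\<close>)
  have zneg: "z x < 0" if "x \<in> {0<..<\<alpha>}" for x
  proof (cases "x \<le> \<gamma>")
    case True
    show ?thesis
    proof (cases "x = \<gamma>")
      case True thus ?thesis using eq neg by (simp add: z_def)
    next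
      case False
      hence "1 - x \<in> {1 - \<gamma><..<1}" using True that by auto
      thus ?thesis using rL True by (simp add: z_def L.rsol_def)
    qed
  next
    case False
    thus ?thesis using rR that by (simp add: z_def R.rsol_def)
  qed
  have dne: "(z has_real_derivative (h x - c - q x / z x)) (at x)" if x: "x \<in> {0<..<\<alpha>}" "x \<noteq> \<gamma>" for x
  proof (cases "x < \<gamma>")
    case True
    have mem: "1 - x \<in> {1 - \<gamma><..<1}" using True x by auto
    have "(zL has_real_derivative (- h (1 - (1 - x)) - - c - - q (1 - (1 - x)) / zL (1 - x))) (at (1 - x))"
      using rL mem unfolding L.rsol_def by blast
    from refl_deriv[OF this]
    have d: "((\<lambda>\<phi>. zL (1 - \<phi>)) has_real_derivative (h x - c - q x / z x)) (at x)"
      using True by (simp add: z_def algebra_simps)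
    show ?thesis
      by (rule has_field_derivative_transform_within_open[OF d, of "{0<..<\<gamma>}"]) (use True x in \<open>auto simp: z_def\<close>)
  next
    case False
    hence xg: "\<gamma> < x" using x by simp
    have "(zR has_real_derivative (h x - c - q x / zR x)) (at x)"
      using rR xg x by (simp add: R.rsol_def)
    hence d: "(zR has_real_derivative (h x - c - q x / z x)) (at x)" using xg by (simp add: z_def)
    show ?thesis
      by (rule has_field_derivative_transform_within_open[OF d, of "{\<gamma><..<\<alpha>}"]) (use xg x in \<open>auto simp: z_def\<close>)
  qed
  have dg: "(z has_real_derivative (h \<gamma> - c - q \<gamma> / z \<gamma>)) (at \<gamma>)"
  proof (rule deriv_join[of "\<gamma>/2" \<gamma> "(\<gamma>+\<alpha>)/2" z "\<lambda>t. h t - c - q t / z t"])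
    show "\<gamma>/2 < \<gamma>" "\<gamma> < (\<gamma>+\<alpha>)/2" using g0 ga by auto
    have sub: "{\<gamma>/2..(\<gamma>+\<alpha>)/2} \<subseteq> {0..\<alpha>}" "{\<gamma>/2..(\<gamma>+\<alpha>)/2} \<subseteq> {0..1}" using g0 ga a1 by auto
    show czs: "continuous_on {\<gamma>/2..(\<gamma>+\<alpha>)/2} z" by (rule continuous_on_subset[OF cz sub(1)])
    have nz: "\<forall>t\<in>{\<gamma>/2..(\<gamma>+\<alpha>)/2}. z t \<noteq> 0"
    proof
      fix t assume "t \<in> {\<gamma>/2..(\<gamma>+\<alpha>)/2}"
      hence "t \<in> {0<..<\<alpha>}" using g0 ga by auto
      thus "z t \<noteq> 0" using zneg by force
    qed
    show "continuous_on {\<gamma>/2..(\<gamma>+\<alpha>)/2} (\<lambda>t. h t - c - q t / z t)"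
      by (intro continuous_intros continuous_on_subset[OF ch sub(2)] continuous_on_subset[OF cq sub(2)] czs nz)
    fix t assume "\<gamma>/2 < t" "t < (\<gamma>+\<alpha>)/2" "t \<noteq> \<gamma>"
    thus "(z has_real_derivative (h t - c - q t / z t)) (at t)" using dne g0 ga by auto
  qed
  have "prob1 \<alpha> h q c z"
    unfolding prob1_def
  proof (intro conjI ballI cz)
    fix x assume x: "x \<in> {0<..<\<alpha>}"
    show "z x < 0" by (rule zneg[OF x])
    show "(z has_real_derivative (h x - c - q x / z x)) (at x)"
      using dne[OF x] dg by (cases "x = \<gamma>") auto
  next
    show "z 0 = 0" using rL g0 by (simp add: z_def L.rsol_def)
    show "z \<alpha> = 0" using rR ga by (simp add: z_def R.rsol_def)
  qed
  thus ?thesis by blast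
qed

end

context setting
begin

lemma ConsF:
  assumes p: "prob1 \<alpha> h q c z1" and rT: "T.rsol c 0 \<zeta>" and z0: "\<zeta> 0 = 0"
  shows "\<exists>z. probP \<alpha> h q c z"
proof -
  define z where "z x = (if x \<le> \<alpha> then z1 x else - \<zeta> (1 - x))" for x
  have cz: "continuous_on {0..1} z"
    unfolding z_def
  proof (rule continuous_on_cases_le[where h = "\<lambda>x. x" and a = \<alpha>])
    have s1: "{x \<in> {0..1}. x \<le> \<alpha>} = {0..\<alpha>}" using a1 by auto
    show "continuous_on {x \<in> {0..1}. x \<le> \<alpha>} z1" using p s1 by (simp add: prob1_def)
    have s2: "{x \<in> {0..1}. \<alpha> \<le> x} = {\<alpha>..1}" using g0 ga by auto
    have c1: "continuous_on {0..1 - \<alpha>} \<zeta>" using rT by (simp add: T.rsol_def)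
    have "continuous_on {\<alpha>..1} (\<lambda>x. \<zeta> (1 - x))"
      by (rule continuous_on_compose2[OF c1 continuous_on_op_minus]) auto
    thus "continuous_on {x \<in> {0..1}. \<alpha> \<le> x} (\<lambda>x. - \<zeta> (1 - x))" using s2 by (auto intro: continuous_intros)
    show "continuous_on {0..1} (\<lambda>x. x)" by (rule continuous_on_id)
    have "z1 \<alpha> = 0" using p by (simp add: prob1_def)
    moreover have "\<zeta> (1 - \<alpha>) = 0" using rT by (simp add: T.rsol_def)
    ultimately show "\<And>x. x \<in> {0..1} \<Longrightarrow> x = \<alpha> \<Longrightarrow> z1 x = - \<zeta> (1 - x)" by simp
  qed
  have "probP \<alpha> h q c z"
    unfolding probP_def
  proof (intro conjI ballI cz)
    fix x assume x: "x \<in> {0<..<1} - {\<alpha>}"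
    show "(z has_real_derivative (h x - c - q x / z x)) (at x)"
    proof (cases "x < \<alpha>")
      case True
      have "(z1 has_real_derivative (h x - c - q x / z1 x)) (at x)" using p True x by (simp add: prob1_def)
      hence d: "(z1 has_real_derivative (h x - c - q x / z x)) (at x)" using True by (simp add: z_def)
      show ?thesis
        by (rule has_field_derivative_transform_within_open[OF d, of "{0<..<\<alpha>}"]) (use True x in \<open>auto simp: z_def\<close>)
    next
      case False
      hence xa: "\<alpha> < x" using x by auto
      have mem: "1 - x \<in> {0<..<1 - \<alpha>}" using xa x by auto
      have "(\<zeta> has_real_derivative (h (1 - (1 - x)) - c - - q (1 - (1 - x)) / \<zeta> (1 - x))) (at (1 - x))"
        using rT mem unfolding T.rsol_def by blast
      from DERIV_minus[OF refl_deriv[OF this]]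
      have d: "((\<lambda>\<phi>. - \<zeta> (1 - \<phi>)) has_real_derivative (h x - c - q x / z x)) (at x)"
        using xa by (simp add: z_def algebra_simps)
      show ?thesis
        by (rule has_field_derivative_transform_within_open[OF d, of "{\<alpha><..<1}"]) (use xa x in \<open>auto simp: z_def\<close>)
    qed
  next
    fix x assume x: "x \<in> {0<..<\<alpha>}"
    show "z x < 0" using p x by (simp add: z_def prob1_def)
  next
    fix x assume x: "x \<in> {\<alpha><..<1}"
    have "1 - x \<in> {0<..<1 - \<alpha>}" using x by auto
    hence "\<zeta> (1 - x) < 0" using rT by (simp add: T.rsol_def)
    thus "z x > 0" using x by (simp add: z_def)
  next
    show "z 0 = 0" using p g0 ga by (simp add: z_def prob1_def)
    show "z \<alpha> = 0" using p by (simp add: z_def prob1_def)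
    show "z 1 = 0" using z0 a1 by (simp add: z_def)
  qed
  thus ?thesis by blast
qed

end

context setting
begin

lemma main:
  "((\<exists>c z. probP \<alpha> h q c z) \<longleftrightarrow>
            (c11 \<gamma> h q < c12 \<gamma> \<alpha> h q \<and> ereal (c1star \<alpha> h q) \<ge> c32 \<alpha> h q))
         \<and> (\<forall>c z. probP \<alpha> h q c z \<longrightarrow>
               c = c1star \<alpha> h q \<and> (\<forall>z'. probP \<alpha> h q c z' \<longrightarrow> (\<forall>x\<in>{0..1}. z' x = z x)))"
proof -
  have part2: "\<forall>c z. probP \<alpha> h q c z \<longrightarrow>
               c = c1star \<alpha> h q \<and> (\<forall>z'. probP \<alpha> h q c z' \<longrightarrow> (\<forall>x\<in>{0..1}. z' x = z x))"
  proof (intro allI impI conjI)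
    fix c z assume P: "probP \<alpha> h q c z"
    show "c = c1star \<alpha> h q" using The1[OF P2one[OF P]] by simp
    fix z' assume P': "probP \<alpha> h q c z'"
    show "\<forall>x\<in>{0..1}. z' x = z x"
    proof
      fix x :: real assume x: "x \<in> {0..1}"
      show "z' x = z x"
      proof (cases "x \<le> \<alpha>")
        case True thus ?thesis using Uz1[OF P2one[OF P'] P2one[OF P]] x by auto
      next
        case False
        have "- z' (1 - (1 - x)) = - z (1 - (1 - x))"
          by (rule T.rsol_unique[OF order_refl T.ab P2T[OF P'] P2T[OF P], of "1 - x"]) (use False x in auto)
        thus ?thesis by simp
      qed
    qed
  qed
  have fwd: "c11 \<gamma> h q < c12 \<gamma> \<alpha> h q \<and> ereal (c1star \<alpha> h q) \<ge> c32 \<alpha> h q"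
    if P: "probP \<alpha> h q c z" for c z
  proof -
    have p1: "prob1 \<alpha> h q c z" by (rule P2one[OF P])
    have cs: "c1star \<alpha> h q = c" by (rule The1[OF p1])
    have zg: "z \<gamma> < 0" using p1 g0 ga by (simp add: prob1_def)
    have "R.V c = z \<gamma>" by (rule R.V_any[OF one2R[OF p1]])
    hence "R.V c < 0" using zg by simp
    hence A: "ereal c < c12 \<gamma> \<alpha> h q" unfolding c12_def R.V_neg_iff .
    have "L.V (- c) = z \<gamma>" using L.V_any[OF one2L[OF p1]] by simp
    hence "L.V (- c) < 0" using zg by simp
    hence "ereal (- c) < cstar (\<lambda>\<phi>. - q (1 - \<phi>)) (\<lambda>\<phi>. - h (1 - \<phi>)) (1 - \<gamma>) 1"
      unfolding L.V_neg_iff .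
    hence B: "c11 \<gamma> h q < ereal c" unfolding c11_def
      by (metis ereal_uminus_less_reorder uminus_ereal.simps(1))
    have C: "c32 \<alpha> h q \<le> ereal c"
    proof (rule ccontr)
      assume "\<not> c32 \<alpha> h q \<le> ereal c"
      hence "ereal c < c32 \<alpha> h q" by simp
      hence "T.V c < 0" unfolding c32_def T.V_neg_iff .
      moreover have "T.V c = - z (1 - 0)" using T.V_any[OF P2T[OF P]] by simp
      moreover have "z 1 = 0" using P by (simp add: probP_def)
      ultimately show False by simp
    qed
    show ?thesis using A B C cs by (auto intro: less_trans)
  qed
  have bwd: "\<exists>c z. probP \<alpha> h q c z"
    if H1: "c11 \<gamma> h q < c12 \<gamma> \<alpha> h q" and H2: "ereal (c1star \<alpha> h q) \<ge> c32 \<alpha> h q"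
  proof -
    define CL where "CL = cstar (\<lambda>\<phi>. - q (1 - \<phi>)) (\<lambda>\<phi>. - h (1 - \<phi>)) (1 - \<gamma>) 1"
    define CR where "CR = c12 \<gamma> \<alpha> h q"
    have c11CL: "c11 \<gamma> h q = - CL" by (simp add: c11_def CL_def)
    have LVneg: "L.V d < 0 \<longleftrightarrow> ereal d < CL" for d unfolding CL_def by (rule L.V_neg_iff)
    have RVneg: "R.V d < 0 \<longleftrightarrow> ereal d < CR" for d unfolding CR_def c12_def by (rule R.V_neg_iff)
    have lt: "- CL < CR" using H1 c11CL CR_def by simp
    obtain m0 where m0: "- CL < ereal m0" "ereal m0 < CR" using ereal_dense2[OF lt] by blast
    obtain B where B: "B \<ge> 1" "\<And>t. t \<in> {0..1} \<Longrightarrow> \<bar>h t\<bar> \<le> B" using bound_on[OF ch] by blast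
    have RVb: "R.V d \<le> - (- B - d) * (\<alpha> - \<gamma>)" for d
    proof (rule R.V_bnd)
      fix x assume "x \<in> {\<gamma>..\<alpha>}"
      hence "x \<in> {0..1}" using g0 ga a1 by auto
      thus "- B \<le> h x" using B(2)[of x] by linarith
    qed
    have LVb: "L.V d \<le> - (- B - d) * (1 - (1 - \<gamma>))" for d
    proof (rule L.V_bnd)
      fix x assume "x \<in> {1 - \<gamma>..1}"
      hence "1 - x \<in> {0..1}" using g0 ga a1 by auto
      thus "- B \<le> - h (1 - x)" using B(2)[of "1 - x"] by linarith
    qed
    define FF where "FF c = R.V c - L.V (- c)" for c
    have FFlip: "\<bar>FF x - FF y\<bar> \<le> ((\<alpha> - \<gamma>) + \<gamma>) * \<bar>x - y\<bar>" for x y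
    proof -
      have "\<bar>FF x - FF y\<bar> \<le> \<bar>R.V x - R.V y\<bar> + \<bar>L.V (- x) - L.V (- y)\<bar>"
        unfolding FF_def by linarith
      also have "\<dots> \<le> (\<alpha> - \<gamma>) * \<bar>x - y\<bar> + (1 - (1 - \<gamma>)) * \<bar>- x - - y\<bar>"
        by (intro add_mono R.V_lip L.V_lip)
      also have "\<dots> = ((\<alpha> - \<gamma>) + \<gamma>) * \<bar>x - y\<bar>" by (simp add: algebra_simps abs_minus_commute)
      finally show ?thesis .
    qed
    have FFc: "continuous_on S FF" for S by (rule lip_cont[OF FFlip]) (use ga g0 in simp)
    obtain p where p: "p \<le> m0" "FF p \<le> 0" "- CL \<le> ereal p"
    proof (cases CL)
      case (real l)
      have "\<not> L.V l < 0" using LVneg[of l] real by simp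
      hence Ll: "L.V l = 0" using L.V_le0[of l] by simp
      show thesis
      proof (rule that[of "- l"])
        show "- l \<le> m0" using m0(1) real by simp
        show "FF (- l) \<le> 0" using Ll R.V_le0[of "- l"] by (simp add: FF_def)
        show "- CL \<le> ereal (- l)" using real by simp
      qed
    next
      case PInf
      define p where "p = min m0 (L.V (- m0) / (\<alpha> - \<gamma>) - B)"
      have agp: "\<alpha> - \<gamma> > 0" using ga by simp
      have "B + p \<le> L.V (- m0) / (\<alpha> - \<gamma>)" by (simp add: p_def)
      hence "(B + p) * (\<alpha> - \<gamma>) \<le> L.V (- m0) / (\<alpha> - \<gamma>) * (\<alpha> - \<gamma>)"
        using agp by (intro mult_right_mono) auto
      hence "(B + p) * (\<alpha> - \<gamma>) \<le> L.V (- m0)" using agp by simp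
      moreover have "R.V p \<le> (B + p) * (\<alpha> - \<gamma>)" using RVb[of p] by (simp add: algebra_simps)
      moreover have "L.V (- m0) \<le> L.V (- p)" by (rule L.V_mono) (simp add: p_def)
      ultimately have "FF p \<le> 0" by (simp add: FF_def)
      thus thesis using that[of p] PInf by (simp add: p_def)
    next
      case MInf
      thus thesis using m0(1) by simp
    qed
    obtain r where r: "m0 \<le> r" "FF r \<ge> 0" "ereal r \<le> CR"
    proof (cases CR)
      case (real m)
      have "\<not> R.V m < 0" using RVneg[of m] real by simp
      hence Rm: "R.V m = 0" using R.V_le0[of m] by simp
      show thesis
      proof (rule that[of m])
        show "m0 \<le> m" using m0(2) real by simp
        show "FF m \<ge> 0" using Rm L.V_le0[of "- m"] by (simp add: FF_def)
        show "ereal m \<le> CR" using real by simp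
      qed
    next
      case PInf
      define r where "r = max m0 (B - R.V m0 / \<gamma>)"
      have "B - r \<le> R.V m0 / \<gamma>" by (simp add: r_def)
      hence "(B - r) * \<gamma> \<le> R.V m0 / \<gamma> * \<gamma>" using g0 by (intro mult_right_mono) auto
      hence "(B - r) * \<gamma> \<le> R.V m0" using g0 by simp
      moreover have "L.V (- r) \<le> (B - r) * \<gamma>" using LVb[of "- r"] by (simp add: algebra_simps)
      moreover have "R.V m0 \<le> R.V r" by (rule R.V_mono) (simp add: r_def)
      ultimately have "FF r \<ge> 0" by (simp add: FF_def)
      thus thesis using that[of r] PInf by (simp add: r_def)
    next
      case MInf
      thus thesis using m0(2) by simp
    qed
    have pr: "p \<le> r" using p r by linarith
    obtain c0 where c0: "p \<le> c0" "c0 \<le> r" "FF c0 = 0"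
      using IVT'[of FF p 0 r] p(2) r(2) pr FFc by auto
    have c0L: "- CL \<le> ereal c0" using p(3) c0(1) by (meson ereal_less_eq(3) order_trans)
    have c0R: "ereal c0 \<le> CR" using r(3) c0(2) by (meson ereal_less_eq(3) order_trans)
    have eqv: "L.V (- c0) = R.V c0" using c0(3) by (simp add: FF_def)
    have Rneg: "R.V c0 < 0"
    proof (cases "ereal c0 < CR")
      case True thus ?thesis using RVneg by simp
    next
      case False
      hence "ereal c0 = CR" using c0R by simp
      hence "- CL < ereal c0" using lt by simp
      hence "ereal (- c0) < CL" by (metis ereal_uminus_less_reorder uminus_ereal.simps(1))
      hence "L.V (- c0) < 0" using LVneg by simp
      thus ?thesis using eqv by simp
    qed
    define zR where "zR = (SOME z. R.rsol c0 \<gamma> z)"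
    define zL where "zL = (SOME z. L.rsol (- c0) (1 - \<gamma>) z)"
    have zR: "R.rsol c0 \<gamma> zR" "R.V c0 = zR \<gamma>" unfolding zR_def R.V_def by (auto intro: R.V_sol)
    have zL: "L.rsol (- c0) (1 - \<gamma>) zL" "L.V (- c0) = zL (1 - \<gamma>)" unfolding zL_def L.V_def by (auto intro: L.V_sol)
    obtain z1 where p1: "prob1 \<alpha> h q c0 z1"
      using ConsE[OF zR(1) zL(1)] zR(2) zL(2) eqv Rneg by auto
    have cs: "c1star \<alpha> h q = c0" by (rule The1[OF p1])
    obtain \<zeta> where \<zeta>: "T.rsol c0 0 \<zeta>" using T.exist by blast
    have "\<zeta> 0 \<le> 0" by (rule T.rsol_nonpos[OF \<zeta> T.ab]) (use a1 in auto)
    moreover have "\<not> \<zeta> 0 < 0"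
    proof
      assume "\<zeta> 0 < 0"
      hence "T.V c0 < 0" using T.V_any[OF \<zeta>] by simp
      hence "ereal c0 < c32 \<alpha> h q" unfolding c32_def T.V_neg_iff[symmetric] .
      thus False using H2 cs by simp
    qed
    ultimately have "\<zeta> 0 = 0" by simp
    thus ?thesis using ConsF[OF p1 \<zeta>] by blast
  qed
  show ?thesis using part2 fwd bwd by blast
qed

end

theorem proposition4p6:
  fixes \<gamma> \<alpha> :: real and f h D D' g q :: "real \<Rightarrow> real"
  assumes "0 < \<gamma>" "\<gamma> < \<alpha>" "\<alpha> < 1"
    and "C1_on 0 1 f h" "f 0 = 0"
    and "C1_on 0 1 D D'"
    and "\<forall>x\<in>{0<..<\<alpha>}. D x > 0" "\<forall>x\<in>{\<alpha><..<1}. D x < 0"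
    and "continuous_on {0..1} g"
    and "\<forall>x\<in>{0<..<\<gamma>}. g x < 0" "\<forall>x\<in>{\<gamma><..<1}. g x > 0"
    and "g 0 = 0" "g \<gamma> = 0" "g 1 = 0"
    and "q = (\<lambda>x. D x * g x)"
  shows "((\<exists>c z. probP \<alpha> h q c z) \<longleftrightarrow>
            (c11 \<gamma> h q < c12 \<gamma> \<alpha> h q \<and> ereal (c1star \<alpha> h q) \<ge> c32 \<alpha> h q))
         \<and> (\<forall>c z. probP \<alpha> h q c z \<longrightarrow>
               c = c1star \<alpha> h q \<and> (\<forall>z'. probP \<alpha> h q c z' \<longrightarrow> (\<forall>x\<in>{0..1}. z' x = z x)))"
proof -
  interpret S: setting \<gamma> \<alpha> f h D D' g q
    using assms unfolding setting_def by blast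
  show ?thesis by (rule S.main)
qed

end
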